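(* Let $u_0\in L^1(\mathbb R)\cap BV(\mathbb R)$ and assume the CFL condition. For $n\ge0$ and $i\in\mathbb Z$ define $$W_i^n=\hat f(U_i^n,U_{i+1}^n)-D_+A(U_i^n)-b\sum_{l=-\infty}^{i}\sum_{j\in\mathbb Z}G^l_jU_j^n.$$ Then for all $n\ge0$, $$\sup_{i\in\mathbb Z}|W_i^n|\le\sup_{i\in\mathbb Z}|W_i^0|\qquad\text{and}\qquad\sum_{i\in\mathbb Z}|W^n_{i+1}-W^n_i|\le\sum_{i\in\mathbb Z}|W^0_{i+1}-W^0_i|.$$
   Context: Let $f,a:\mathbb R\to\mathbb R$ be Lipschitz, $a\ge0$ bounded, $f(0)=0$, $A(u)=\int_0^ua(s)ds$, $b\ge0$, $\lambda\in(0,1)$, $c_\lambda>0$, $\mathcal L[u](x)=c_\lambda\int_{|z|>0}\frac{u(x+z)-u(x)}{|z|^{1+\lambda}}dz$. Let $\hat f:\mathbb R^2\to\mathbb R$ be $C^1$ and Lipschitz, consistent ($\hat f(u,u)=f(u)$), nondecreasing in its first and nonincreasing in its second argument. Grid: $x_i=i\Delta x$, $I_i=[x_i,x_{i+1})$, $t_n=n\Delta t$. Weights $G^i_j=\int_{I_i}\mathcal L[\mathbf 1_{I_j}](x)dx$; these satisfy $G^i_j\ge0$ for $i\ne j$, $\sum_j|G^i_j|<\infty$, $\sum_iG^i_j=\sum_jG^i_j=0$, $G^i_j=G^j_i$, $G^{i+1}_{j+1}=G^i_j$, and $G^i_i=-d_\lambda\Delta x^{1-\lambda}$ with $d_\lambda=c_\lambda\big(\int_{|z|<1}|z|^{-\lambda}dz+\int_{|z|>1}|z|^{-1-\lambda}dz\big)$.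 $D_\pm U_i=\pm(U_{i\pm1}-U_i)/\Delta x$, $\mathcal L\langle U\rangle_i=\frac1{\Delta x}\sum_jG^i_jU_j$. Scheme: $U_i^{n+1}=U_i^n-\Delta t\,D_-\big[\hat f(U_i^n,U_{i+1}^n)-D_+A(U_i^n)\big]+\Delta t\,b\,\mathcal L\langle U^n\rangle_i$, $U^0_i=\frac1{\Delta x}\int_{I_i}u_0$. CFL condition: $\frac{\Delta t}{\Delta x}(\|\partial_{1}\hat f\|_\infty+\|\partial_{2}\hat f\|_\infty)+\frac{2\Delta t}{\Delta x^2}\|a\|_\infty+b\,d_\lambda\frac{\Delta t}{\Delta x^\lambda}\le1$. *)

theory Defs
  imports "HOL-Analysis.Analysis"
begin

definition cell :: "real \<Rightarrow> int \<Rightarrow> real set" where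
  "cell dx i = {real_of_int i * dx ..< (real_of_int i + 1) * dx}"

definition nonlocalL :: "real \<Rightarrow> real \<Rightarrow> (real \<Rightarrow> real) \<Rightarrow> real \<Rightarrow> real" where
  "nonlocalL c lam u x =
     c * (LINT z:{z. \<bar>z\<bar> > 0}|lborel. (u (x + z) - u x) / (\<bar>z\<bar> powr (1 + lam)))"

definition Gw :: "real \<Rightarrow> real \<Rightarrow> real \<Rightarrow> int \<Rightarrow> int \<Rightarrow> real" where
  "Gw c lam dx i j = (LINT x:cell dx i|lborel. nonlocalL c lam (indicator (cell dx j)) x)"

definition d_lam :: "real \<Rightarrow> real \<Rightarrow> real" where
  "d_lam c lam = c * ((LINT z:{z. \<bar>z\<bar> < 1}|lborel. \<bar>z\<bar> powr (- lam))
                    + (LINT z:{z. \<bar>z\<bar> > 1}|lborel. \<bar>z\<bar> powr (- 1 - lam)))"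

definition Aint :: "(real \<Rightarrow> real) \<Rightarrow> real \<Rightarrow> real" where
  "Aint a u = interval_lebesgue_integral lborel (ereal 0) (ereal u) a"

definition partial1 :: "(real \<Rightarrow> real \<Rightarrow> real) \<Rightarrow> real \<Rightarrow> real \<Rightarrow> real" where
  "partial1 g x y = deriv (\<lambda>s. g s y) x"
definition partial2 :: "(real \<Rightarrow> real \<Rightarrow> real) \<Rightarrow> real \<Rightarrow> real \<Rightarrow> real" where
  "partial2 g x y = deriv (\<lambda>s. g x s) y"

definition C1_2 :: "(real \<Rightarrow> real \<Rightarrow> real) \<Rightarrow> bool" where
  "C1_2 g \<longleftrightarrow>
     (\<forall>x y. (\<lambda>s. g s y) differentiable (at x) \<and> (\<lambda>s. g x s) differentiable (at y)) \<and>
     continuous_on UNIV (\<lambda>p. partial1 g (fst p) (snd p)) \<and>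
     continuous_on UNIV (\<lambda>p. partial2 g (fst p) (snd p))"

definition BV :: "(real \<Rightarrow> real) \<Rightarrow> bool" where
  "BV u \<longleftrightarrow> (\<exists>C. \<forall>\<phi> \<phi>'.
      (\<forall>x. (\<phi> has_real_derivative \<phi>' x) (at x)) \<longrightarrow> continuous_on UNIV \<phi>' \<longrightarrow>
      (\<exists>R. \<forall>x. \<bar>x\<bar> > R \<longrightarrow> \<phi> x = 0) \<longrightarrow> (\<forall>x. \<bar>\<phi> x\<bar> \<le> 1) \<longrightarrow>
      \<bar>LINT x|lborel. u x * \<phi>' x\<bar> \<le> C)"

definition U_init :: "real \<Rightarrow> (real \<Rightarrow> real) \<Rightarrow> int \<Rightarrow> real" where
  "U_init dx u0 i = (1 / dx) * (LINT x:cell dx i|lborel. u0 x)"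

definition flux :: "(real \<Rightarrow> real \<Rightarrow> real) \<Rightarrow> (real \<Rightarrow> real) \<Rightarrow> real \<Rightarrow> (int \<Rightarrow> real) \<Rightarrow> int \<Rightarrow> real" where
  "flux fh A dx U i = fh (U i) (U (i + 1)) - (A (U (i + 1)) - A (U i)) / dx"

definition step :: "(real \<Rightarrow> real \<Rightarrow> real) \<Rightarrow> (real \<Rightarrow> real) \<Rightarrow> (int \<Rightarrow> int \<Rightarrow> real)
     \<Rightarrow> real \<Rightarrow> real \<Rightarrow> real \<Rightarrow> (int \<Rightarrow> real) \<Rightarrow> int \<Rightarrow> real" where
  "step fh A G dx dt b U i =
     U i - dt * (flux fh A dx U i - flux fh A dx U (i - 1)) / dx
         + dt * b * ((1 / dx) * infsum (\<lambda>j. G i j * U j) UNIV)"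

primrec scheme :: "(real \<Rightarrow> real \<Rightarrow> real) \<Rightarrow> (real \<Rightarrow> real) \<Rightarrow> (int \<Rightarrow> int \<Rightarrow> real)
     \<Rightarrow> real \<Rightarrow> real \<Rightarrow> real \<Rightarrow> (int \<Rightarrow> real) \<Rightarrow> nat \<Rightarrow> int \<Rightarrow> real" where
  "scheme fh A G dx dt b U0 0 = U0"
| "scheme fh A G dx dt b U0 (Suc n) = step fh A G dx dt b (scheme fh A G dx dt b U0 n)"

definition Wq :: "(real \<Rightarrow> real \<Rightarrow> real) \<Rightarrow> (real \<Rightarrow> real) \<Rightarrow> (int \<Rightarrow> int \<Rightarrow> real)
     \<Rightarrow> real \<Rightarrow> real \<Rightarrow> (int \<Rightarrow> real) \<Rightarrow> int \<Rightarrow> real" where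
  "Wq fh A G dx b U i = flux fh A dx U i
      - b * infsum (\<lambda>l. infsum (\<lambda>j. G l j * U j) UNIV) {..i}"

end

theory Submission
  imports Defs
begin


lemma sm_abs: fixes f :: "'a \<Rightarrow> real" assumes "f summable_on A" shows "(\<lambda>k. \<bar>f k\<bar>) summable_on A"
proof -
  have "(\<lambda>k. norm (f k)) summable_on A" using summable_on_iff_abs_summable_on_real[of f A] assms by blast
  then show ?thesis by simp
qed

lemma sm_bounded: fixes f :: "int \<Rightarrow> real" assumes "f summable_on UNIV"
  shows "\<bar>f k\<bar> \<le> infsum (\<lambda>k. \<bar>f k\<bar>) UNIV"
proof -
  have "infsum (\<lambda>k. \<bar>f k\<bar>) {k} \<le> infsum (\<lambda>k. \<bar>f k\<bar>) UNIV"
    by (rule infsum_mono_neutral) (auto intro: sm_abs assms)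
  then show ?thesis by simp
qed

lemma sm_mult_bdd: fixes f c :: "'a \<Rightarrow> real"
  assumes "f summable_on UNIV" "\<And>k. \<bar>c k\<bar> \<le> B"
  shows "(\<lambda>k. c k * f k) summable_on A"
proof -
  have "(\<lambda>k. B * \<bar>f k\<bar>) summable_on UNIV"
    using sm_abs[OF assms(1)] by (rule summable_on_cmult_right)
  have B0: "B \<ge> 0" using assms(2)[of undefined] by linarith
  then have "(\<lambda>k. norm (B * f k)) summable_on UNIV"
    using \<open>(\<lambda>k. B * \<bar>f k\<bar>) summable_on UNIV\<close> by (simp add: abs_mult)
  then have "(\<lambda>k. norm (c k * f k)) summable_on UNIV"
    by (rule Infinite_Sum.abs_summable_on_comparison_test) (use assms(2) B0 in \<open>auto simp: abs_mult intro!: mult_right_mono\<close>)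
  then have "(\<lambda>k. c k * f k) summable_on UNIV"
    using summable_on_iff_abs_summable_on_real by blast
  then show ?thesis by (rule summable_on_subset) auto
qed

lemma sm_shift: fixes f :: "int \<Rightarrow> 'a::{topological_comm_monoid_add,t2_space}"
  shows "(\<lambda>l. f (l + k)) summable_on UNIV \<longleftrightarrow> f summable_on UNIV"
    and "infsum (\<lambda>l. f (l + k)) UNIV = infsum f UNIV"
   apply (rule summable_on_reindex_bij_witness[where j="\<lambda>l. l + k" and i="\<lambda>l. l - k"]; simp)
  apply (rule infsum_reindex_bij_witness[where j="\<lambda>l. l + k" and i="\<lambda>l. l - k"]; simp)
  done

lemma sm_refl: fixes f :: "int \<Rightarrow> 'a::{topological_comm_monoid_add,t2_space}"
  shows "(\<lambda>l. f (k - l)) summable_on UNIV \<longleftrightarrow> f summable_on UNIV"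
    and "infsum (\<lambda>l. f (k - l)) UNIV = infsum f UNIV"
   apply (rule summable_on_reindex_bij_witness[where i="\<lambda>l. k - l" and j="\<lambda>l. k - l"]; simp)
  apply (rule infsum_reindex_bij_witness[where i="\<lambda>l. k - l" and j="\<lambda>l. k - l"]; simp)
  done

lemma sm_prod: fixes g V :: "int \<Rightarrow> real"
  assumes g: "g summable_on UNIV" and V: "V summable_on UNIV"
  shows "(\<lambda>(k,l). g k * V (l + k)) summable_on UNIV"
proof -
  have aV: "(\<lambda>l. \<bar>V (l + k)\<bar>) summable_on UNIV" for k
    using sm_shift(1)[of "\<lambda>l. \<bar>V l\<bar>" k] sm_abs[OF V] by simp
  have eq: "infsum (\<lambda>l. \<bar>g k * V (l + k)\<bar>) UNIV = \<bar>g k\<bar> * infsum (\<lambda>l. \<bar>V l\<bar>) UNIV" for k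
    using sm_shift(2)[of "\<lambda>l. \<bar>V l\<bar>" k] by (simp add: abs_mult infsum_cmult_right')
  have 1: "\<forall>k\<in>UNIV. (\<lambda>l. norm ((\<lambda>(k,l). g k * V (l + k)) (k, l))) summable_on UNIV"
    using summable_on_cmult_right[OF aV, of "\<bar>g k\<bar>" for k] by (simp add: abs_mult)
  have 2: "(\<lambda>k. norm (infsum (\<lambda>l. norm ((\<lambda>(k,l). g k * V (l + k)) (k, l))) UNIV)) summable_on UNIV"
  proof -
    have "(\<lambda>k. \<bar>g k\<bar> * infsum (\<lambda>l. \<bar>V l\<bar>) UNIV) summable_on UNIV"
      using summable_on_cmult_left[OF sm_abs[OF g]] by blast
    moreover have "norm (infsum (\<lambda>l. norm ((\<lambda>(k,l). g k * V (l + k)) (k, l))) UNIV) = \<bar>g k\<bar> * infsum (\<lambda>l. \<bar>V l\<bar>) UNIV" for k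
      using eq[of k] infsum_nonneg[of UNIV "\<lambda>l. \<bar>V l\<bar>"] by simp
    ultimately show ?thesis by simp
  qed
  have "(\<lambda>x. norm ((\<lambda>(k,l). g k * V (l + k)) x)) summable_on Sigma UNIV (\<lambda>_. UNIV)"
    using Infinite_Sum.abs_summable_on_Sigma_iff[of "\<lambda>(k,l). g k * V (l + k)" UNIV "\<lambda>_. UNIV"] 1 2 by blast
  then show ?thesis using summable_on_iff_abs_summable_on_real by (metis UNIV_Times_UNIV)
qed



lemma sm_cmp: fixes f h :: "'a \<Rightarrow> real"
  assumes "h summable_on A" "\<And>i. i \<in> A \<Longrightarrow> \<bar>f i\<bar> \<le> h i"
  shows "f summable_on A"
proof -
  have "(\<lambda>i. norm (f i)) summable_on A"
  proof (rule Infinite_Sum.abs_summable_on_comparison_test)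
    show "(\<lambda>i. norm (h i)) summable_on A"
      using assms(1) by (rule summable_on_cong[THEN iffD1, rotated]) (use assms(2) in force)
  qed (use assms(2) in force)
  then show ?thesis using summable_on_iff_abs_summable_on_real by blast
qed

lemma infsum_diff': fixes f g :: "'a \<Rightarrow> real"
  assumes "f summable_on A" "g summable_on A"
  shows "infsum (\<lambda>x. f x - g x) A = infsum f A - infsum g A"
    and "(\<lambda>x. f x - g x) summable_on A"
proof -
  have "infsum (\<lambda>x. f x + (- g x)) A = infsum f A + infsum (\<lambda>x. - g x) A"
    by (rule infsum_add) (use assms summable_on_uminus in auto)
  then show "infsum (\<lambda>x. f x - g x) A = infsum f A - infsum g A" by (simp add: infsum_uminus)
  show "(\<lambda>x. f x - g x) summable_on A"
    using summable_on_add[OF assms(1) summable_on_uminus[THEN iffD2, OF assms(2)]] by simp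
qed

lemma psum_step: fixes V :: "int \<Rightarrow> real" assumes "V summable_on UNIV"
  shows "infsum V {..m} = infsum V {..m-1} + V m"
proof -
  have "{..m} = insert m {..m-1}" by auto
  moreover have "V summable_on {..m-1}" by (rule summable_on_subset[OF assms]) auto
  ultimately show ?thesis by (simp add: infsum_insert)
qed

lemma psum_shift: fixes V :: "int \<Rightarrow> real"
  shows "infsum (\<lambda>l. V (l + k)) {..i} = infsum V {..i+k}"
  by (rule infsum_reindex_bij_witness[where j="\<lambda>l. l + k" and i="\<lambda>l. l - k"]) auto

lemma psum_abs_le: fixes V :: "int \<Rightarrow> real" assumes "V summable_on UNIV"
  shows "\<bar>infsum V A\<bar> \<le> infsum (\<lambda>l. \<bar>V l\<bar>) UNIV"
proof -
  have "\<bar>infsum V A\<bar> \<le> infsum (\<lambda>l. \<bar>V l\<bar>) A"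
    using norm_infsum_bound[of V A] summable_on_subset[OF sm_abs[OF assms], of A] by simp
  also have "\<dots> \<le> infsum (\<lambda>l. \<bar>V l\<bar>) UNIV"
    by (rule infsum_mono_neutral) (auto intro: sm_abs assms summable_on_subset[OF sm_abs[OF assms]])
  finally show ?thesis .
qed

lemma const_step: fixes P :: "int \<Rightarrow> real" assumes "\<And>m. P m = P (m - 1)" shows "P m = P 0"
proof (induction m rule: int_induct[where k=0])
  case base then show ?case by simp
next
  case (step1 i) then show ?case using assms[of "i+1"] by simp
next
  case (step2 i) then show ?case using assms[of i] by simp
qed

lemma infsum_point: fixes W :: "'a \<Rightarrow> real"
  shows "infsum (\<lambda>k. if k = a then c else 0) UNIV = c"
proof -
  have "infsum (\<lambda>k. if k = a then c else 0) UNIV = infsum (\<lambda>k. if k = a then c else 0) {a}"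
    by (rule infsum_cong_neutral) auto
  then show ?thesis by simp
qed

lemma ennreal_infsum: fixes f :: "'a \<Rightarrow> real"
  assumes "f summable_on A" "\<And>x. x \<in> A \<Longrightarrow> f x \<ge> 0"
  shows "infsum (\<lambda>x. ennreal (f x)) A = ennreal (infsum f A)"
proof -
  have "\<And>F. finite F \<Longrightarrow> F \<subseteq> A \<Longrightarrow> sum (ennreal \<circ> f) F = ennreal (sum f F)"
    by (metis (mono_tags, lifting) comp_def assms(2) subsetD sum.cong sum_ennreal)
  then have "ennreal (infsum f A) = infsum (ennreal \<circ> f) A"
    by (simp add: infsum_comm_additive_general assms(1))
  then show ?thesis by (simp add: comp_def)
qed

definition conv :: "(int \<Rightarrow> real) \<Rightarrow> (int \<Rightarrow> real) \<Rightarrow> int \<Rightarrow> real" where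
  "conv g V l = infsum (\<lambda>k. g k * V (l + k)) UNIV"

lemma conv_bridge: "infsum (\<lambda>j. g (j - i) * U j) UNIV = conv g U i"
  unfolding conv_def
  by (rule infsum_reindex_bij_witness[where j="\<lambda>j. j - i" and i="\<lambda>k. i + k"]) auto

lemma conv_summable_k: fixes g V :: "int \<Rightarrow> real"
  assumes g: "g summable_on UNIV" and V: "V summable_on UNIV"
  shows "(\<lambda>k. g k * V (l + k)) summable_on A"
proof -
  have "(\<lambda>k. V (k + l)) summable_on UNIV" using sm_shift(1)[of V l] V by simp
  then have "(\<lambda>k. g k * V (k + l)) summable_on A"
    by (rule sm_mult_bdd) (rule sm_bounded[OF g])
  then show ?thesis by (simp add: add.commute)
qed

lemma conv_prod_lk: fixes g V :: "int \<Rightarrow> real"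
  assumes g: "g summable_on UNIV" and V: "V summable_on UNIV"
  shows "(\<lambda>(l,k). g k * V (l + k)) summable_on UNIV \<times> UNIV"
  using sm_prod[OF g V] summable_on_swap[of "\<lambda>(l,k). g k * V (l + k)" UNIV UNIV]
  by (simp add: case_prod_unfold)

lemma conv_summable: fixes g V :: "int \<Rightarrow> real"
  assumes g: "g summable_on UNIV" and V: "V summable_on UNIV"
  shows "conv g V summable_on UNIV"
  unfolding conv_def
  using summable_on_Sigma_banach[of "\<lambda>l k. g k * V (l + k)" UNIV "\<lambda>_. UNIV"] conv_prod_lk[OF g V]
  by simp

lemma conv_diff: fixes g U V :: "int \<Rightarrow> real"
  assumes g: "g summable_on UNIV" and U: "U summable_on UNIV" and V: "V summable_on UNIV"
  shows "conv g (\<lambda>j. U j - V j) l = conv g U l - conv g V l"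
  unfolding conv_def
  using infsum_diff'(1)[OF conv_summable_k[OF g U] conv_summable_k[OF g V]]
  by (simp add: right_diff_distrib)

lemma conv_cmult: "conv g (\<lambda>j. a * V j) l = a * conv g V l"
  unfolding conv_def by (simp add: infsum_cmult_right' mult.left_commute)

lemma conv_fubini: fixes g V :: "int \<Rightarrow> real"
  assumes g: "g summable_on UNIV" and V: "V summable_on UNIV"
  shows "infsum (conv g V) {..i} = infsum (\<lambda>k. g k * infsum V {..i+k}) UNIV"
proof -
  have s: "(\<lambda>(l,k). g k * V (l + k)) summable_on {..i} \<times> UNIV"
    by (rule summable_on_subset[OF conv_prod_lk[OF g V]]) auto
  have "infsum (conv g V) {..i} = infsum (\<lambda>l. infsum (\<lambda>k. g k * V (l + k)) UNIV) {..i}"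
    unfolding conv_def ..
  also have "\<dots> = infsum (\<lambda>k. infsum (\<lambda>l. g k * V (l + k)) {..i}) UNIV"
    by (rule infsum_swap_banach) (use s in simp)
  also have "\<dots> = infsum (\<lambda>k. g k * infsum V {..i+k}) UNIV"
    by (simp add: infsum_cmult_right' psum_shift)
  finally show ?thesis .
qed



lemma point_summable: "(\<lambda>k. if k = a then (c::real) else 0) summable_on UNIV"
proof -
  have "(\<lambda>k. if k = a then (c::real) else 0) summable_on {a}" by simp
  then show ?thesis by (subst (asm) summable_on_cong_neutral[where T=UNIV]) auto
qed

lemma conv_total: fixes g V :: "int \<Rightarrow> real"
  assumes g: "g summable_on UNIV" and V: "V summable_on UNIV"
  shows "infsum (conv g V) UNIV = infsum g UNIV * infsum V UNIV"
proof -
  have "infsum (conv g V) UNIV = infsum (\<lambda>l. infsum (\<lambda>k. g k * V (l + k)) UNIV) UNIV"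
    unfolding conv_def ..
  also have "\<dots> = infsum (\<lambda>k. infsum (\<lambda>l. g k * V (l + k)) UNIV) UNIV"
    by (rule infsum_swap_banach) (use conv_prod_lk[OF g V] in simp)
  also have "\<dots> = infsum (\<lambda>k. g k * infsum V UNIV) UNIV"
    by (simp add: infsum_cmult_right' sm_shift(2))
  also have "\<dots> = infsum g UNIV * infsum V UNIV" by (rule infsum_cmult_left')
  finally show ?thesis .
qed

locale disc =
  fixes fh :: "real \<Rightarrow> real \<Rightarrow> real" and A :: "real \<Rightarrow> real" and g :: "int \<Rightarrow> real"
    and dx dt b p1 p2 al :: real
  assumes dx: "dx > 0" and dt: "dt > 0" and b: "b \<ge> 0"
    and q1: "\<And>x x' y. \<exists>q. 0 \<le> q \<and> q \<le> p1 \<and> fh x' y - fh x y = q * (x' - x)"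
    and q2: "\<And>x y y'. \<exists>q. 0 \<le> q \<and> q \<le> p2 \<and> fh x y' - fh x y = - q * (y' - y)"
    and qa: "\<And>u v. \<exists>q. 0 \<le> q \<and> q \<le> al \<and> A v - A u = q * (v - u)"
    and fh00: "fh 0 0 = 0" and A0: "A 0 = 0"
    and gs: "g summable_on UNIV" and gsum: "infsum g UNIV = 0"
    and gpos: "\<And>k. k \<noteq> 0 \<Longrightarrow> g k \<ge> 0"
    and cfl: "dt/dx*(p1+p2) + 2*dt/dx^2*al + b*dt/dx*(- g 0) \<le> 1"
begin

definition "Wd U = Wq fh A (\<lambda>l j. g (j - l)) dx b U"
definition "St U = step fh A (\<lambda>l j. g (j - l)) dx dt b U"

lemma pnn: "p1 \<ge> 0" "p2 \<ge> 0" "al \<ge> 0"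
  using q1[of 0 0 0] q2[of 0 0 0] qa[of 0 0] by auto

lemma fh_bound: "\<bar>fh x y\<bar> \<le> p1 * \<bar>x\<bar> + p2 * \<bar>y\<bar>"
proof -
  obtain q where q: "0 \<le> q" "q \<le> p1" "fh x 0 - fh 0 0 = q * (x - 0)" using q1 by blast
  obtain r where r: "0 \<le> r" "r \<le> p2" "fh x y - fh x 0 = - r * (y - 0)" using q2 by blast
  have "\<bar>fh x y\<bar> = \<bar>q * x - r * y\<bar>" using q(3) r(3) fh00 by (simp add: algebra_simps)
  also have "\<dots> \<le> q * \<bar>x\<bar> + r * \<bar>y\<bar>" using q r by (simp add: abs_mult abs_triangle_ineq4 order_trans[OF abs_triangle_ineq4])
  also have "\<dots> \<le> p1 * \<bar>x\<bar> + p2 * \<bar>y\<bar>" using q r by (intro add_mono mult_right_mono) auto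
  finally show ?thesis .
qed

lemma A_bound: "\<bar>A v\<bar> \<le> al * \<bar>v\<bar>"
proof -
  obtain q where q: "0 \<le> q" "q \<le> al" "A v - A 0 = q * (v - 0)" using qa by blast
  then have "\<bar>A v\<bar> = q * \<bar>v\<bar>" using A0 by (simp add: abs_mult)
  then show ?thesis using q by (simp add: mult_right_mono)
qed

lemma sm_shift1: fixes V :: "int \<Rightarrow> real" assumes "V summable_on UNIV"
  shows "(\<lambda>i. V (i + k)) summable_on UNIV"
  using sm_shift(1)[of V k] assms by simp

lemma flux_summable: assumes U: "U summable_on UNIV" shows "flux fh A dx U summable_on UNIV"
proof (rule sm_cmp)
  let ?h = "\<lambda>i. p1 * \<bar>U i\<bar> + p2 * \<bar>U (i+1)\<bar> + (1/dx) * (al * \<bar>U (i+1)\<bar> + al * \<bar>U i\<bar>)"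
  have a0: "(\<lambda>i. \<bar>U i\<bar>) summable_on UNIV" by (rule sm_abs[OF U])
  have a1: "(\<lambda>i. \<bar>U (i+1)\<bar>) summable_on UNIV" using sm_shift1[OF a0, of 1] by simp
  show "?h summable_on UNIV"
    by (intro summable_on_add summable_on_cmult_right a0 a1)
  show "\<bar>flux fh A dx U i\<bar> \<le> ?h i" for i
  proof -
    have "\<bar>flux fh A dx U i\<bar> \<le> \<bar>fh (U i) (U (i + 1))\<bar> + (\<bar>A (U (i + 1))\<bar> + \<bar>A (U i)\<bar>) / dx"
      unfolding flux_def using dx by (simp add: abs_triangle_ineq4 order_trans[OF abs_triangle_ineq4] 
          divide_right_mono abs_triangle_ineq4 order.trans[OF abs_triangle_ineq4 add_left_mono] )
    also have "\<dots> \<le> p1 * \<bar>U i\<bar> + p2 * \<bar>U (i+1)\<bar> + (al * \<bar>U (i+1)\<bar> + al * \<bar>U i\<bar>) / dx"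
      using fh_bound[of "U i" "U (i+1)"] A_bound[of "U (i+1)"] A_bound[of "U i"] dx
      by (intro add_mono divide_right_mono) auto
    finally show ?thesis by simp
  qed
qed


lemma W_eq: "Wd U i = flux fh A dx U i - b * infsum (conv g U) {..i}"
  unfolding Wd_def Wq_def using conv_bridge[of g _ U] by simp

lemma St_eq: "St U i = U i - dt/dx * (flux fh A dx U i - flux fh A dx U (i-1)) + b*dt/dx * conv g U i"
  unfolding St_def step_def using conv_bridge[of g i U] by simp

context fixes U :: "int \<Rightarrow> real" assumes U: "U summable_on UNIV"
begin

lemma Fs: "flux fh A dx U summable_on UNIV" by (rule flux_summable[OF U])
lemma Fs1: "(\<lambda>i. flux fh A dx U (i - 1)) summable_on UNIV"
  using sm_shift1[OF Fs, of "-1"] by simp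
lemma GUs: "conv g U summable_on UNIV" by (rule conv_summable[OF gs U])

lemma St_sum: "St U summable_on UNIV"
proof -
  have "(\<lambda>i. U i - dt/dx * (flux fh A dx U i - flux fh A dx U (i-1)) + b*dt/dx * conv g U i) summable_on UNIV"
    by (intro summable_on_add summable_on_cmult_right infsum_diff'(2) U Fs Fs1 GUs)
  then show ?thesis by (simp add: St_eq[abs_def])
qed

lemma DW_eq: "Wd U j - Wd U (j-1) = flux fh A dx U j - flux fh A dx U (j-1) - b * conv g U j"
proof -
  have "infsum (conv g U) {..j} = infsum (conv g U) {..j-1} + conv g U j"
    by (rule psum_step[OF GUs])
  then show ?thesis unfolding W_eq by (simp add: algebra_simps)
qed

lemma dU: "St U j - U j = - (dt/dx) * (Wd U j - Wd U (j-1))"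
  unfolding St_eq DW_eq by (simp add: algebra_simps)

lemma DWs: "(\<lambda>j. Wd U j - Wd U (j-1)) summable_on UNIV"
proof -
  have "(\<lambda>j. (- (dx/dt)) * (St U j - U j)) summable_on UNIV"
    by (intro summable_on_cmult_right infsum_diff'(2) St_sum U)
  moreover have "(- (dx/dt)) * (St U j - U j) = Wd U j - Wd U (j-1)" for j
    using dU[of j] dx dt by (simp add: field_simps)
  ultimately show ?thesis by simp
qed

lemma Xs: "(\<lambda>i. Wd U (i+1) - Wd U i) summable_on UNIV"
  using sm_shift1[OF DWs, of 1] by simp

lemma Wconst: "\<exists>L. \<forall>m. Wd U m = L + infsum (\<lambda>j. Wd U j - Wd U (j-1)) {..m}"
proof -
  define P where "P m = Wd U m - infsum (\<lambda>j. Wd U j - Wd U (j-1)) {..m}" for m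
  have "P m = P (m - 1)" for m
    unfolding P_def using psum_step[OF DWs, of m] by simp
  then have e: "P m = P 0" for m by (rule const_step)
  have "Wd U m = P 0 + infsum (\<lambda>j. Wd U j - Wd U (j-1)) {..m}" for m
  proof -
    have "Wd U m = P m + infsum (\<lambda>j. Wd U j - Wd U (j-1)) {..m}" unfolding P_def by simp
    then show ?thesis using e[of m] by simp
  qed
  then show ?thesis by blast
qed

lemma Wbd: "\<exists>B. \<forall>m. \<bar>Wd U m\<bar> \<le> B"
proof -
  obtain L where L: "\<And>m. Wd U m = L + infsum (\<lambda>j. Wd U j - Wd U (j-1)) {..m}" using Wconst by blast
  have "\<bar>Wd U m\<bar> \<le> \<bar>L\<bar> + infsum (\<lambda>j. \<bar>Wd U j - Wd U (j-1)\<bar>) UNIV" for m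
    using L[of m] psum_abs_le[OF DWs, of "{..m}"] by linarith
  then show ?thesis by blast
qed

lemma gW_sum: "(\<lambda>k. g k * Wd U (i+k)) summable_on UNIV"
proof -
  obtain B where B: "\<And>m. \<bar>Wd U m\<bar> \<le> B" using Wbd by blast
  have "(\<lambda>k. Wd U (i+k) * g k) summable_on UNIV" by (rule sm_mult_bdd[OF gs B])
  then show ?thesis by (simp add: mult.commute)
qed

lemma conv_W: "infsum (conv g (St U)) {..i} - infsum (conv g U) {..i}
    = - (dt/dx) * infsum (\<lambda>k. g k * Wd U (i+k)) UNIV"
proof -
  obtain L where L: "\<And>m. Wd U m = L + infsum (\<lambda>j. Wd U j - Wd U (j-1)) {..m}" using Wconst by blast
  let ?D = "\<lambda>j. Wd U j - Wd U (j-1)"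
  have s1: "conv g (St U) summable_on {..i}" by (rule summable_on_subset[OF conv_summable[OF gs St_sum]]) auto
  have s2: "conv g U summable_on {..i}" by (rule summable_on_subset[OF GUs]) auto
  have "infsum (conv g (St U)) {..i} - infsum (conv g U) {..i}
     = infsum (\<lambda>l. conv g (St U) l - conv g U l) {..i}"
    using infsum_diff'(1)[OF s1 s2] by simp
  also have "\<dots> = infsum (\<lambda>l. - (dt/dx) * conv g ?D l) {..i}"
  proof (rule infsum_cong)
    fix l
    have "conv g (St U) l - conv g U l = conv g (\<lambda>j. St U j - U j) l"
      by (rule conv_diff[OF gs St_sum U, symmetric])
    also have "\<dots> = conv g (\<lambda>j. - (dt/dx) * ?D j) l" using dU by simp
    also have "\<dots> = - (dt/dx) * conv g ?D l" by (rule conv_cmult)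
    finally show "conv g (St U) l - conv g U l = - (dt/dx) * conv g ?D l" .
  qed
  also have "\<dots> = - (dt/dx) * infsum (conv g ?D) {..i}" by (rule infsum_cmult_right')
  also have "infsum (conv g ?D) {..i} = infsum (\<lambda>k. g k * infsum ?D {..i+k}) UNIV"
    by (rule conv_fubini[OF gs DWs])
  also have "\<dots> = infsum (\<lambda>k. g k * Wd U (i+k) - L * g k) UNIV"
  proof (rule infsum_cong)
    fix k
    have "infsum ?D {..i+k} = Wd U (i+k) - L" using L[of "i+k"] by linarith
    then show "g k * infsum ?D {..i+k} = g k * Wd U (i+k) - L * g k" unfolding \<open>infsum ?D {..i+k} = Wd U (i+k) - L\<close> by (simp add: algebra_simps)
  qed
  also have "\<dots> = infsum (\<lambda>k. g k * Wd U (i+k)) UNIV - infsum (\<lambda>k. L * g k) UNIV"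
    by (rule infsum_diff'(1)[OF gW_sum summable_on_cmult_right[OF gs]])
  also have "infsum (\<lambda>k. L * g k) UNIV = 0" using gsum by (simp add: infsum_cmult_right')
  finally show ?thesis by simp
qed


lemma Wform: "\<exists>D C. (\<forall>i. 0 \<le> D i \<and> D i \<le> dt/dx*(p1 + al/dx)) \<and> (\<forall>i. 0 \<le> C i \<and> C i \<le> dt/dx*(p2 + al/dx)) \<and>
   (\<forall>i. Wd (St U) i = Wd U i - D i * (Wd U i - Wd U (i-1)) + C i * (Wd U (i+1) - Wd U i)
        + b*dt/dx * infsum (\<lambda>k. g k * Wd U (i+k)) UNIV)"
proof -
  let ?V = "St U"
  have "\<forall>i. \<exists>q. 0 \<le> q \<and> q \<le> p1 \<and> fh (?V i) (U (i+1)) - fh (U i) (U (i+1)) = q * (?V i - U i)" using q1 by blast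
  then obtain Q1 where Q1: "\<And>i. 0 \<le> Q1 i \<and> Q1 i \<le> p1 \<and> fh (?V i) (U (i+1)) - fh (U i) (U (i+1)) = Q1 i * (?V i - U i)" by metis
  have "\<forall>i. \<exists>q. 0 \<le> q \<and> q \<le> p2 \<and> fh (?V i) (?V (i+1)) - fh (?V i) (U (i+1)) = - q * (?V (i+1) - U (i+1))" using q2 by blast
  then obtain Q2 where Q2: "\<And>i. 0 \<le> Q2 i \<and> Q2 i \<le> p2 \<and> fh (?V i) (?V (i+1)) - fh (?V i) (U (i+1)) = - Q2 i * (?V (i+1) - U (i+1))" by metis
  have "\<forall>i. \<exists>q. 0 \<le> q \<and> q \<le> al \<and> A (?V i) - A (U i) = q * (?V i - U i)" using qa by blast
  then obtain QA where QA: "\<And>i. 0 \<le> QA i \<and> QA i \<le> al \<and> A (?V i) - A (U i) = QA i * (?V i - U i)" by metis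
  define D where "D i = dt/dx * (Q1 i + QA i / dx)" for i
  define C where "C i = dt/dx * (Q2 i + QA (i+1) / dx)" for i
  have Db: "0 \<le> D i \<and> D i \<le> dt/dx*(p1 + al/dx)" for i
    unfolding D_def using Q1[of i] QA[of i] dx dt
    by (auto intro!: mult_left_mono add_mono divide_right_mono)
  have Cb: "0 \<le> C i \<and> C i \<le> dt/dx*(p2 + al/dx)" for i
    unfolding C_def using Q2[of i] QA[of "i+1"] dx dt
    by (auto intro!: mult_left_mono add_mono divide_right_mono)
  have eq: "Wd ?V i = Wd U i - D i * (Wd U i - Wd U (i-1)) + C i * (Wd U (i+1) - Wd U i)
        + b*dt/dx * infsum (\<lambda>k. g k * Wd U (i+k)) UNIV" for i
  proof -
    define S where "S = infsum (\<lambda>k. g k * Wd U (i+k)) UNIV"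
    define a where "a = Wd U i - Wd U (i-1)"
    define c where "c = Wd U (i+1) - Wd U i"
    have d0: "?V i - U i = - (dt/dx) * a" unfolding a_def by (rule dU)
    have d1: "?V (i+1) - U (i+1) = - (dt/dx) * c" unfolding c_def using dU[of "i+1"] by simp
    have e1: "Wd ?V i - Wd U i = (flux fh A dx ?V i - flux fh A dx U i)
         - b*(infsum (conv g ?V) {..i} - infsum (conv g U) {..i})"
      using W_eq[of ?V i] W_eq[of U i] by (simp add: algebra_simps)
    have e2: "flux fh A dx ?V i - flux fh A dx U i =
        (fh (?V i) (?V (i+1)) - fh (?V i) (U (i+1))) + (fh (?V i) (U (i+1)) - fh (U i) (U (i+1)))
        - ((A (?V (i+1)) - A (U (i+1))) - (A (?V i) - A (U i))) / dx"
      unfolding flux_def by (simp add: diff_divide_distrib)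
    have "Wd ?V i - Wd U i = - Q2 i * (- (dt/dx) * c) + Q1 i * (- (dt/dx) * a)
        - (QA (i+1) * (- (dt/dx) * c) - QA i * (- (dt/dx) * a)) / dx + b * (dt/dx) * S"
      unfolding e1 e2 conv_W S_def
      using Q1[of i] Q2[of i] QA[of i] QA[of "i+1"] d0 d1 by simp
    also have "\<dots> = - D i * a + C i * c + b*dt/dx * S"
      unfolding D_def C_def using dx by (simp add: field_simps)
    finally show ?thesis unfolding a_def c_def S_def by simp
  qed
  show ?thesis using Db Cb eq by blast
qed

end

definition "hh k = (if k = 0 then 0 else g k)"

lemma hh_nonneg: "hh k \<ge> 0" unfolding hh_def using gpos by auto

lemma hh_sum: "hh summable_on UNIV"
  by (rule sm_cmp[OF sm_abs[OF gs]]) (simp add: hh_def)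

lemma g_split: "g k = hh k + (if k = 0 then g 0 else 0)" unfolding hh_def by auto

lemma hh_total: "infsum hh UNIV = - g 0"
proof -
  have "infsum g UNIV = infsum (\<lambda>k. hh k + (if k = 0 then g 0 else 0)) UNIV"
    by (rule infsum_cong) (rule g_split)
  also have "\<dots> = infsum hh UNIV + g 0"
    using infsum_add[OF hh_sum, of "\<lambda>k. if k = 0 then g 0 else 0"] infsum_point[of 0 "g 0"]
    by (simp add: point_summable)
  finally show ?thesis using gsum by simp
qed

lemma sigma_nonneg: "- g 0 \<ge> 0"
  using hh_total infsum_nonneg[of UNIV hh] hh_nonneg by simp

lemma cfl': "dt/dx*(p1 + al/dx) + dt/dx*(p2 + al/dx) + b*dt/dx*(- g 0) \<le> 1"
proof -
  have "dt/dx*(p1 + al/dx) + dt/dx*(p2 + al/dx) = dt/dx*(p1+p2) + 2*dt/dx^2*al"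
    using dx by (simp add: field_simps power2_eq_square)
  then show ?thesis using cfl by simp
qed

lemma gW_split: fixes W :: "int \<Rightarrow> real" assumes B: "\<And>m. \<bar>W m\<bar> \<le> B"
  shows "infsum (\<lambda>k. g k * W (i+k)) UNIV = infsum (\<lambda>k. hh k * W (i+k)) UNIV - (- g 0) * W i"
    and "(\<lambda>k. hh k * W (i+k)) summable_on UNIV"
proof -
  show s: "(\<lambda>k. hh k * W (i+k)) summable_on UNIV"
    using sm_mult_bdd[OF hh_sum B, of "\<lambda>k. i + k"] by (simp add: mult.commute)
  have "infsum (\<lambda>k. g k * W (i+k)) UNIV = infsum (\<lambda>k. hh k * W (i+k) + (if k = 0 then g 0 * W i else 0)) UNIV"
    by (rule infsum_cong) (simp add: hh_def)
  also have "\<dots> = infsum (\<lambda>k. hh k * W (i+k)) UNIV + g 0 * W i"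
    using infsum_add[OF s, of "\<lambda>k. if k = 0 then g 0 * W i else 0"] infsum_point[of 0 "g 0 * W i"]
    by (simp add: point_summable)
  finally show "infsum (\<lambda>k. g k * W (i+k)) UNIV = infsum (\<lambda>k. hh k * W (i+k)) UNIV - (- g 0) * W i" by simp
qed


context fixes U :: "int \<Rightarrow> real" assumes U: "U summable_on UNIV"
begin

lemma Wform2: "\<exists>D C. (\<forall>i. 0 \<le> D i \<and> D i \<le> dt/dx*(p1 + al/dx)) \<and> (\<forall>i. 0 \<le> C i \<and> C i \<le> dt/dx*(p2 + al/dx)) \<and>
   (\<forall>i. Wd (St U) i = Wd U i - D i * (Wd U i - Wd U (i-1)) + C i * (Wd U (i+1) - Wd U i)
        + b*dt/dx * (infsum (\<lambda>k. hh k * Wd U (i+k)) UNIV - (- g 0) * Wd U i))"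
proof -
  obtain B where B: "\<And>m. \<bar>Wd U m\<bar> \<le> B" using Wbd[OF U] by blast
  obtain D C where DC: "(\<forall>i. 0 \<le> D i \<and> D i \<le> dt/dx*(p1 + al/dx))" "(\<forall>i. 0 \<le> C i \<and> C i \<le> dt/dx*(p2 + al/dx))"
   "(\<forall>i. Wd (St U) i = Wd U i - D i * (Wd U i - Wd U (i-1)) + C i * (Wd U (i+1) - Wd U i)
        + b*dt/dx * infsum (\<lambda>k. g k * Wd U (i+k)) UNIV)" using Wform[OF U] by blast
  have "Wd (St U) i = Wd U i - D i * (Wd U i - Wd U (i-1)) + C i * (Wd U (i+1) - Wd U i)
        + b*dt/dx * (infsum (\<lambda>k. hh k * Wd U (i+k)) UNIV - (- g 0) * Wd U i)" for i
    using DC(3) gW_split(1)[where W="Wd U" and B=B and i=i, OF B] by simp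
  then show ?thesis using DC(1,2) by blast
qed

lemma sup_step: assumes M: "\<And>i. \<bar>Wd U i\<bar> \<le> M" shows "\<bar>Wd (St U) i\<bar> \<le> M"
proof -
  obtain D C where Db: "\<And>i. 0 \<le> D i \<and> D i \<le> dt/dx*(p1 + al/dx)" and Cb: "\<And>i. 0 \<le> C i \<and> C i \<le> dt/dx*(p2 + al/dx)"
    and eq: "\<And>i. Wd (St U) i = Wd U i - D i * (Wd U i - Wd U (i-1)) + C i * (Wd U (i+1) - Wd U i)
        + b*dt/dx * (infsum (\<lambda>k. hh k * Wd U (i+k)) UNIV - (- g 0) * Wd U i)" using Wform2 by blast
  define H where "H = infsum (\<lambda>k. hh k * Wd U (i+k)) UNIV"
  define sg where "sg = - g 0"
  define be where "be = b*dt/dx"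
  have sg0: "sg \<ge> 0" unfolding sg_def by (rule sigma_nonneg)
  have be0: "be \<ge> 0" unfolding be_def using b dt dx by simp
  have M0: "M \<ge> 0" using M[of 0] by linarith
  have hs: "(\<lambda>k. hh k * Wd U (i+k)) summable_on UNIV" by (rule gW_split(2)[OF M])
  have habs: "(\<lambda>k. \<bar>hh k * Wd U (i+k)\<bar>) summable_on UNIV" by (rule sm_abs[OF hs])
  have "\<bar>H\<bar> \<le> infsum (\<lambda>k. \<bar>hh k * Wd U (i+k)\<bar>) UNIV"
    unfolding H_def using norm_infsum_bound[of "\<lambda>k. hh k * Wd U (i+k)" UNIV] habs by simp
  also have "\<dots> \<le> infsum (\<lambda>k. hh k * M) UNIV"
    by (rule infsum_mono[OF habs summable_on_cmult_left[OF hh_sum]])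
       (simp add: abs_mult hh_nonneg mult_left_mono M)
  also have "\<dots> = sg * M" unfolding sg_def using hh_total by (simp add: infsum_cmult_left')
  finally have Hb: "\<bar>H\<bar> \<le> sg * M" .
  have cf: "D i + C i + be * sg \<le> 1" using Db[of i] Cb[of i] cfl' unfolding be_def sg_def by linarith
  have eqW: "Wd (St U) i = (1 - D i - C i - be * sg) * Wd U i + D i * Wd U (i-1) + C i * Wd U (i+1) + be * H"
    unfolding eq H_def be_def sg_def by (simp add: algebra_simps)
  have "\<bar>Wd (St U) i\<bar> \<le> (1 - D i - C i - be * sg) * \<bar>Wd U i\<bar> + D i * \<bar>Wd U (i-1)\<bar> + C i * \<bar>Wd U (i+1)\<bar> + be * \<bar>H\<bar>"
  proof -
    have t: "\<bar>P + Q + R + S\<bar> \<le> \<bar>P\<bar> + \<bar>Q\<bar> + \<bar>R\<bar> + \<bar>S\<bar>" for P Q R S :: real by arith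
    have c1: "\<bar>(1 - D i - C i - be * sg) * Wd U i\<bar> = (1 - D i - C i - be * sg) * \<bar>Wd U i\<bar>"
    proof -
      have "1 - D i - C i - be * sg \<ge> 0" using cf by linarith
      then show ?thesis by (simp add: abs_mult)
    qed
    have c2: "\<bar>D i * Wd U (i-1)\<bar> = D i * \<bar>Wd U (i-1)\<bar>" using Db[of i] by (simp add: abs_mult)
    have c3: "\<bar>C i * Wd U (i+1)\<bar> = C i * \<bar>Wd U (i+1)\<bar>" using Cb[of i] by (simp add: abs_mult)
    have c4: "\<bar>be * H\<bar> = be * \<bar>H\<bar>" using be0 by (simp add: abs_mult)
    show ?thesis unfolding eqW using t[of "(1 - D i - C i - be * sg) * Wd U i" "D i * Wd U (i-1)" "C i * Wd U (i+1)" "be * H"]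
      unfolding c1 c2 c3 c4 .
  qed
  also have "\<dots> \<le> (1 - D i - C i - be * sg) * M + D i * M + C i * M + be * (sg * M)"
  proof -
    have "(1 - D i - C i - be * sg) * \<bar>Wd U i\<bar> \<le> (1 - D i - C i - be * sg) * M"
      by (rule mult_left_mono) (use M[of i] cf in linarith)+
    moreover have "D i * \<bar>Wd U (i-1)\<bar> \<le> D i * M"
      by (rule mult_left_mono) (use M[of "i-1"] Db[of i] in linarith)+
    moreover have "C i * \<bar>Wd U (i+1)\<bar> \<le> C i * M"
      by (rule mult_left_mono) (use M[of "i+1"] Cb[of i] in linarith)+
    moreover have "be * \<bar>H\<bar> \<le> be * (sg * M)"
      by (rule mult_left_mono) (use Hb be0 in linarith)+
    ultimately show ?thesis by linarith
  qed
  also have "\<dots> = M" by (simp add: algebra_simps)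
  finally show ?thesis .
qed


lemma tv_step: "infsum (\<lambda>i. \<bar>Wd (St U) (i+1) - Wd (St U) i\<bar>) UNIV \<le> infsum (\<lambda>i. \<bar>Wd U (i+1) - Wd U i\<bar>) UNIV"
proof -
  obtain D C where Db: "\<And>i. 0 \<le> D i \<and> D i \<le> dt/dx*(p1 + al/dx)" and Cb: "\<And>i. 0 \<le> C i \<and> C i \<le> dt/dx*(p2 + al/dx)"
    and eq: "\<And>i. Wd (St U) i = Wd U i - D i * (Wd U i - Wd U (i-1)) + C i * (Wd U (i+1) - Wd U i)
        + b*dt/dx * (infsum (\<lambda>k. hh k * Wd U (i+k)) UNIV - (- g 0) * Wd U i)" using Wform2 by blast
  obtain B where B: "\<And>m. \<bar>Wd U m\<bar> \<le> B" using Wbd[OF U] by blast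
  define X where "X i = Wd U (i+1) - Wd U i" for i
  define X' where "X' i = Wd (St U) (i+1) - Wd (St U) i" for i
  define aX where "aX i = \<bar>X i\<bar>" for i
  define Hf where "Hf i = infsum (\<lambda>k. hh k * Wd U (i+k)) UNIV" for i
  define sg where "sg = - g 0"
  define be where "be = b*dt/dx"
  define E where "E i = 1 - C i - D (i+1) - be * sg" for i
  have sg0: "sg \<ge> 0" unfolding sg_def by (rule sigma_nonneg)
  have be0: "be \<ge> 0" unfolding be_def using b dt dx by simp
  have Xs': "X summable_on UNIV" unfolding X_def by (rule Xs[OF U])
  have aXs: "aX summable_on UNIV" unfolding aX_def by (rule sm_abs[OF Xs'])
  have E0: "0 \<le> E i \<and> E i \<le> 1" for i
    using Db[of "i+1"] Cb[of i] cfl' be0 sg0 unfolding E_def be_def sg_def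
    by (smt (verit) mult_nonneg_nonneg)
  have eq2: "Wd (St U) j = Wd U j - D j * X (j-1) + C j * X j + be * (Hf j - sg * Wd U j)" for j
    unfolding eq X_def Hf_def be_def sg_def by simp
  have dH: "Hf (i+1) - Hf i = conv hh X i" for i
  proof -
    have "Hf (i+1) - Hf i = infsum (\<lambda>k. hh k * Wd U (i+1+k) - hh k * Wd U (i+k)) UNIV"
      unfolding Hf_def
      by (rule infsum_diff'(1)[symmetric]) (rule gW_split(2)[where W="Wd U" and B=B, OF B])+
    also have "\<dots> = conv hh X i" unfolding conv_def X_def
      by (rule infsum_cong) (simp add: algebra_simps)
    finally show ?thesis .
  qed
  have X'eq: "X' i = E i * X i + C (i+1) * X (i+1) + D i * X (i-1) + be * conv hh X i" for i
    unfolding X'_def eq2 dH[symmetric] E_def X_def by (simp add: algebra_simps)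
  have cvb: "\<bar>conv hh X i\<bar> \<le> conv hh aX i" for i
  proof -
    have s: "(\<lambda>k. hh k * X (i + k)) summable_on UNIV" by (rule conv_summable_k[OF hh_sum Xs'])
    have "\<bar>conv hh X i\<bar> \<le> infsum (\<lambda>k. \<bar>hh k * X (i + k)\<bar>) UNIV"
      unfolding conv_def using norm_infsum_bound[of "\<lambda>k. hh k * X (i + k)" UNIV] sm_abs[OF s] by simp
    also have "\<dots> = conv hh aX i" unfolding conv_def aX_def
      by (rule infsum_cong) (simp add: abs_mult hh_nonneg)
    finally show ?thesis .
  qed
  define R where "R i = E i * aX i + C (i+1) * aX (i+1) + D i * aX (i-1) + be * conv hh aX i" for i
  have XR: "\<bar>X' i\<bar> \<le> R i" for i
  proof -
    have t: "\<bar>P + Q + S + T\<bar> \<le> \<bar>P\<bar> + \<bar>Q\<bar> + \<bar>S\<bar> + \<bar>T\<bar>" for P Q S T :: real by arith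
    have "\<bar>X' i\<bar> \<le> \<bar>E i * X i\<bar> + \<bar>C (i+1) * X (i+1)\<bar> + \<bar>D i * X (i-1)\<bar> + \<bar>be * conv hh X i\<bar>"
      unfolding X'eq by (rule t)
    also have "\<dots> \<le> R i"
      unfolding R_def using E0[of i] Cb[of "i+1"] Db[of i] be0 cvb[of i]
      by (simp add: abs_mult mult_left_mono aX_def)
    finally show ?thesis .
  qed
  have cbd: "\<bar>C i\<bar> \<le> dt/dx*(p2 + al/dx)" for i using Cb[of i] by simp
  have dbd: "\<bar>D i\<bar> \<le> dt/dx*(p1 + al/dx)" for i using Db[of i] by simp
  have ebd: "\<bar>E i\<bar> \<le> 1" for i using E0[of i] by simp
  have aX1: "(\<lambda>i. aX (i+1)) summable_on UNIV" using sm_shift1[OF aXs, of 1] .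
  have aXm: "(\<lambda>i. aX (i-1)) summable_on UNIV" using sm_shift1[OF aXs, of "-1"] by simp
  have sC1: "(\<lambda>i. C (i+1) * aX (i+1)) summable_on UNIV" by (rule sm_mult_bdd[OF aX1 cbd])
  have sC0: "(\<lambda>i. C i * aX i) summable_on UNIV" by (rule sm_mult_bdd[OF aXs cbd])
  have sD1: "(\<lambda>i. D i * aX (i-1)) summable_on UNIV" by (rule sm_mult_bdd[OF aXm dbd])
  have sD0: "(\<lambda>i. D (i+1) * aX i) summable_on UNIV" by (rule sm_mult_bdd[OF aXs dbd])
  have sK: "conv hh aX summable_on UNIV" by (rule conv_summable[OF hh_sum aXs])
  have sK0: "(\<lambda>i. sg * aX i) summable_on UNIV" by (rule summable_on_cmult_right[OF aXs])
  have T1: "infsum (\<lambda>i. C (i+1) * aX (i+1) - C i * aX i) UNIV = 0"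
    using infsum_diff'(1)[OF sC1 sC0] sm_shift(2)[of "\<lambda>i. C i * aX i" 1] by simp
  have T2: "infsum (\<lambda>i. D i * aX (i-1) - D (i+1) * aX i) UNIV = 0"
    using infsum_diff'(1)[OF sD1 sD0] sm_shift(2)[of "\<lambda>i. D (i+1) * aX i" "-1"] by simp
  have T3: "infsum (\<lambda>i. be * (conv hh aX i - sg * aX i)) UNIV = 0"
  proof -
    have "infsum (\<lambda>i. conv hh aX i - sg * aX i) UNIV = infsum (conv hh aX) UNIV - sg * infsum aX UNIV"
      using infsum_diff'(1)[OF sK sK0] by (simp add: infsum_cmult_right')
    also have "\<dots> = 0" using conv_total[OF hh_sum aXs] hh_total unfolding sg_def by simp
    finally show ?thesis by (simp add: infsum_cmult_right')
  qed
  have Req: "R i = aX i + (C (i+1) * aX (i+1) - C i * aX i) + (D i * aX (i-1) - D (i+1) * aX i)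
      + be * (conv hh aX i - sg * aX i)" for i
    unfolding R_def E_def by (simp add: algebra_simps)
  have s1: "(\<lambda>i. C (i+1) * aX (i+1) - C i * aX i) summable_on UNIV" by (rule infsum_diff'(2)[OF sC1 sC0])
  have s2: "(\<lambda>i. D i * aX (i-1) - D (i+1) * aX i) summable_on UNIV" by (rule infsum_diff'(2)[OF sD1 sD0])
  have s3: "(\<lambda>i. be * (conv hh aX i - sg * aX i)) summable_on UNIV"
    by (rule summable_on_cmult_right[OF infsum_diff'(2)[OF sK sK0]])
  have sR: "R summable_on UNIV"
    unfolding Req[abs_def] by (intro summable_on_add aXs s1 s2 s3)
  have SR: "infsum R UNIV = infsum aX UNIV"
  proof -
    have "infsum R UNIV = infsum aX UNIV + infsum (\<lambda>i. C (i+1) * aX (i+1) - C i * aX i) UNIV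
       + infsum (\<lambda>i. D i * aX (i-1) - D (i+1) * aX i) UNIV + infsum (\<lambda>i. be * (conv hh aX i - sg * aX i)) UNIV"
      unfolding Req[abs_def]
      by (subst infsum_add, (intro summable_on_add aXs s1 s2 s3)+)+ simp
    then show ?thesis using T1 T2 T3 by simp
  qed
  have sX': "(\<lambda>i. \<bar>X' i\<bar>) summable_on UNIV" by (rule sm_cmp[OF sR]) (use XR in simp)
  have "infsum (\<lambda>i. \<bar>X' i\<bar>) UNIV \<le> infsum R UNIV" by (rule infsum_mono[OF sX' sR XR])
  then show ?thesis using SR unfolding X'_def aX_def X_def by simp
qed

end


lemma Sc_Suc: "scheme fh A (\<lambda>l j. g (j - l)) dx dt b U0 (Suc n) = St (scheme fh A (\<lambda>l j. g (j - l)) dx dt b U0 n)"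
  by (simp add: St_def)

context fixes U0 :: "int \<Rightarrow> real" assumes U0: "U0 summable_on UNIV"
begin

abbreviation "Sc n \<equiv> scheme fh A (\<lambda>l j. g (j - l)) dx dt b U0 n"

lemma Sc_sum: "Sc n summable_on UNIV"
proof (induction n)
  case 0 then show ?case using U0 by simp
next
  case (Suc n) then show ?case unfolding Sc_Suc by (rule St_sum)
qed

lemma Sc_sup: assumes M: "\<And>i. \<bar>Wd U0 i\<bar> \<le> M" shows "\<bar>Wd (Sc n) i\<bar> \<le> M"
proof (induction n arbitrary: i)
  case 0 then show ?case using M by simp
next
  case (Suc n) then show ?case unfolding Sc_Suc using sup_step[OF Sc_sum] by blast
qed

lemma Sc_tv: "infsum (\<lambda>i. \<bar>Wd (Sc n) (i+1) - Wd (Sc n) i\<bar>) UNIV \<le> infsum (\<lambda>i. \<bar>Wd U0 (i+1) - Wd U0 i\<bar>) UNIV"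
proof (induction n)
  case 0 then show ?case by simp
next
  case (Suc n) then show ?case unfolding Sc_Suc using tv_step[OF Sc_sum, of n] by linarith
qed

lemma Sc_sup_enn: "(SUP i. ennreal \<bar>Wd (Sc n) i\<bar>) \<le> (SUP i. ennreal \<bar>Wd U0 i\<bar>)"
proof (cases "(SUP i. ennreal \<bar>Wd U0 i\<bar>) = top")
  case True then show ?thesis by (simp only: top_greatest)
next
  case False
  define S where "S = (SUP i. ennreal \<bar>Wd U0 i\<bar>)"
  define M where "M = enn2real S"
  have SM: "S = ennreal M" unfolding M_def using False S_def by (metis ennreal_enn2real less_top)
  have M0: "M \<ge> 0" unfolding M_def by simp
  have "\<bar>Wd U0 i\<bar> \<le> M" for i
  proof -
    have "ennreal \<bar>Wd U0 i\<bar> \<le> S" unfolding S_def by (rule SUP_upper) simp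
    then show ?thesis unfolding SM using M0 by (simp add: ennreal_le_iff)
  qed
  then have "\<bar>Wd (Sc n) i\<bar> \<le> M" for i by (rule Sc_sup)
  then have "ennreal \<bar>Wd (Sc n) i\<bar> \<le> S" for i unfolding SM by (simp add: ennreal_leI)
  then show ?thesis unfolding S_def by (rule SUP_least)
qed

lemma Sc_tv_enn: "infsum (\<lambda>i. ennreal \<bar>Wd (Sc n) (i+1) - Wd (Sc n) i\<bar>) UNIV
   \<le> infsum (\<lambda>i. ennreal \<bar>Wd U0 (i+1) - Wd U0 i\<bar>) UNIV"
proof -
  have e: "infsum (\<lambda>i. ennreal \<bar>Wd V (i+1) - Wd V i\<bar>) UNIV = ennreal (infsum (\<lambda>i. \<bar>Wd V (i+1) - Wd V i\<bar>) UNIV)"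
    if "V summable_on UNIV" for V
    by (rule ennreal_infsum) (use sm_abs[OF Xs[OF that]] in auto)
  show ?thesis unfolding e[OF Sc_sum] e[OF U0] by (rule ennreal_leI[OF Sc_tv])
qed

end

end


lemma ind_mult_if: "(\<lambda>z. indicator S z * f z) = (\<lambda>z. if z \<in> S then f z else (0::real))"
  by (auto simp: fun_eq_iff)

lemma nn_pow_tail:
  fixes e t :: real assumes e: "e < -1" and t: "t > 0"
  shows "(\<integral>\<^sup>+z. ennreal (indicator {t..} z * z powr e) \<partial>lborel) = ennreal (- (t powr (e+1)) / (e+1))"
proof -
  have "((\<lambda>z. indicator {t..} z * z powr e) has_integral (- (t powr (e+1)) / (e+1))) UNIV"
    using has_integral_powr_to_inf[OF e t] has_integral_restrict_UNIV[of "{t..}" "\<lambda>z. z powr e"]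
    unfolding ind_mult_if by simp
  then show ?thesis
    by (intro nn_integral_has_integral_lborel) (auto simp: indicator_def)
qed

lemma nn_pow_head:
  fixes a c :: real assumes a: "a > -1" and c: "c \<ge> 0"
  shows "(\<integral>\<^sup>+z. ennreal (indicator {0..c} z * z powr a) \<partial>lborel) = ennreal (c powr (a+1) / (a+1))"
proof -
  have "((\<lambda>z. indicator {0..c} z * z powr a) has_integral (c powr (a+1) / (a+1))) UNIV"
    using has_integral_powr_from_0[OF a c] has_integral_restrict_UNIV[of "{0..c}" "\<lambda>z. z powr a"]
    unfolding ind_mult_if by simp
  then show ?thesis
    by (intro nn_integral_has_integral_lborel) (auto simp: indicator_def)
qed


definition kern :: "real \<Rightarrow> real \<Rightarrow> real" where "kern lam z = 1 / \<bar>z\<bar> powr (1 + lam)"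

lemma kern_nonneg: "kern lam z \<ge> 0" unfolding kern_def by simp

lemma kern_meas[measurable]: "kern lam \<in> borel_measurable borel"
  unfolding kern_def by measurable

lemma kern_sym: "kern lam (- z) = kern lam z" unfolding kern_def by simp

lemma K1: assumes lam: "0 < lam" and t: "t > 0"
  shows "(\<integral>\<^sup>+z. ennreal (indicator {t..} z * kern lam z) \<partial>lborel) = ennreal (t powr (- lam) / lam)"
proof -
  have "(\<integral>\<^sup>+z. ennreal (indicator {t..} z * kern lam z) \<partial>lborel)
      = (\<integral>\<^sup>+z. ennreal (indicator {t..} z * z powr (-1 - lam)) \<partial>lborel)"
  proof (rule nn_integral_cong)
    fix z :: real
    show "ennreal (indicator {t..} z * kern lam z) = ennreal (indicator {t..} z * z powr (-1 - lam))"
    proof (cases "t \<le> z")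
      case True
      then have "z > 0" using t by linarith
      then have "kern lam z = z powr (-1 - lam)"
        unfolding kern_def by (simp add: powr_minus_divide[symmetric])
      then show ?thesis by simp
    qed simp
  qed
  also have "\<dots> = ennreal (- (t powr (-1 - lam + 1)) / (-1 - lam + 1))"
    by (rule nn_pow_tail) (use lam t in auto)
  also have "- (t powr (-1 - lam + 1)) / (-1 - lam + 1) = t powr (- lam) / lam"
    by simp
  finally show ?thesis .
qed

lemma K1': assumes lam: "0 < lam" and t: "t > 0"
  shows "(\<integral>\<^sup>+z. ennreal (indicator {t<..} z * kern lam z) \<partial>lborel) = ennreal (t powr (- lam) / lam)"
proof -
  have "(\<integral>\<^sup>+z. ennreal (indicator {t<..} z * kern lam z) \<partial>lborel) = (\<integral>\<^sup>+z. ennreal (indicator {t..} z * kern lam z) \<partial>lborel)"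
    by (intro nn_integral_cong_AE eventually_mono[OF AE_lborel_singleton[of t]]) (auto simp: indicator_def)
  then show ?thesis using K1[OF assms] by simp
qed

lemma reflect_nn: fixes f :: "real \<Rightarrow> ennreal" assumes [measurable]: "f \<in> borel_measurable borel"
  shows "(\<integral>\<^sup>+x. f x \<partial>lborel) = (\<integral>\<^sup>+x. f (- x) \<partial>lborel)"
  using nn_integral_real_affine[of f "-1" 0] by simp

lemma translate_nn: fixes f :: "real \<Rightarrow> ennreal" assumes [measurable]: "f \<in> borel_measurable borel"
  shows "(\<integral>\<^sup>+x. f x \<partial>lborel) = (\<integral>\<^sup>+x. f (t + x) \<partial>lborel)"
  using nn_integral_real_affine[of f 1 t] by simp

lemma K2: assumes lam: "0 < lam" and t: "t > 0"
  shows "(\<integral>\<^sup>+z. ennreal (indicator {..<-t} z * kern lam z) \<partial>lborel) = ennreal (t powr (- lam) / lam)"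
proof -
  have "(\<integral>\<^sup>+z. ennreal (indicator {..<-t} z * kern lam z) \<partial>lborel)
     = (\<integral>\<^sup>+z. ennreal (indicator {..<-t} (-z) * kern lam (-z)) \<partial>lborel)"
    by (rule reflect_nn) measurable
  also have "\<dots> = (\<integral>\<^sup>+z. ennreal (indicator {t<..} z * kern lam z) \<partial>lborel)"
    by (rule nn_integral_cong) (auto simp: kern_sym indicator_def)
  finally show ?thesis using K1'[OF assms] by simp
qed


lemma K3: assumes lam: "0 < lam" and x: "a < x" "x < b"
  shows "(\<integral>\<^sup>+z. ennreal ((1 - indicator {a..<b} (x + z)) * kern lam z) \<partial>lborel)
       = ennreal (((x - a) powr (- lam) + (b - x) powr (- lam)) / lam)"
proof -
  have "(\<integral>\<^sup>+z. ennreal ((1 - indicator {a..<b} (x + z)) * kern lam z) \<partial>lborel)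
      = (\<integral>\<^sup>+z. ennreal (indicator {..<-(x-a)} z * kern lam z) + ennreal (indicator {b-x..} z * kern lam z) \<partial>lborel)"
  proof (rule nn_integral_cong)
    fix z :: real
    have "(1 - indicator {a..<b} (x + z)) * kern lam z = indicator {..<-(x-a)} z * kern lam z + indicator {b-x..} z * kern lam z"
      using x by (auto simp: indicator_def)
    then show "ennreal ((1 - indicator {a..<b} (x + z)) * kern lam z) = ennreal (indicator {..<-(x-a)} z * kern lam z) + ennreal (indicator {b-x..} z * kern lam z)"
      by (simp add: ennreal_plus[symmetric] kern_nonneg del: ennreal_plus)
  qed
  also have "\<dots> = (\<integral>\<^sup>+z. ennreal (indicator {..<-(x-a)} z * kern lam z) \<partial>lborel) + (\<integral>\<^sup>+z. ennreal (indicator {b-x..} z * kern lam z) \<partial>lborel)"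
    by (rule nn_integral_add) measurable
  also have "\<dots> = ennreal ((x - a) powr (- lam) / lam) + ennreal ((b - x) powr (- lam) / lam)"
    using K2[OF lam, of "x - a"] K1[OF lam, of "b - x"] x by simp
  also have "\<dots> = ennreal (((x - a) powr (- lam) + (b - x) powr (- lam)) / lam)"
    using lam by (simp add: ennreal_plus[symmetric] add_divide_distrib del: ennreal_plus)
  finally show ?thesis .
qed

lemma nn_cmult: fixes f :: "real \<Rightarrow> real" assumes [measurable]: "f \<in> borel_measurable borel" and c: "c \<ge> 0"
  and f: "\<And>x. f x \<ge> 0"
  shows "(\<integral>\<^sup>+x. ennreal (c * f x) \<partial>lborel) = ennreal c * (\<integral>\<^sup>+x. ennreal (f x) \<partial>lborel)"
  using c f by (simp add: ennreal_mult nn_integral_cmult)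

lemma K4a: assumes lam: "0 < lam" "lam < 1" and ab: "a < b"
  shows "(\<integral>\<^sup>+x. ennreal (indicator {a..<b} x * (x - a) powr (- lam)) \<partial>lborel) = ennreal ((b - a) powr (1 - lam) / (1 - lam))"
proof -
  have "(\<integral>\<^sup>+x. ennreal (indicator {a..<b} x * (x - a) powr (- lam)) \<partial>lborel)
      = (\<integral>\<^sup>+x. ennreal (indicator {a..<b} (a + x) * (a + x - a) powr (- lam)) \<partial>lborel)"
    by (rule translate_nn) measurable
  also have "\<dots> = (\<integral>\<^sup>+x. ennreal (indicator {0..b-a} x * x powr (- lam)) \<partial>lborel)"
    by (intro nn_integral_cong_AE eventually_mono[OF AE_lborel_singleton[of "b - a"]]) (auto simp: indicator_def)
  also have "\<dots> = ennreal ((b - a) powr (- lam + 1) / (- lam + 1))"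
    by (rule nn_pow_head) (use lam ab in auto)
  finally show ?thesis by (simp add: add.commute)
qed

lemma K4b: assumes lam: "0 < lam" "lam < 1" and ab: "a < b"
  shows "(\<integral>\<^sup>+x. ennreal (indicator {a..<b} x * (b - x) powr (- lam)) \<partial>lborel) = ennreal ((b - a) powr (1 - lam) / (1 - lam))"
proof -
  have "(\<integral>\<^sup>+x. ennreal (indicator {a..<b} x * (b - x) powr (- lam)) \<partial>lborel)
      = (\<integral>\<^sup>+x. ennreal (indicator {a..<b} (b + x) * (b - (b + x)) powr (- lam)) \<partial>lborel)"
    by (rule translate_nn) measurable
  also have "\<dots> = (\<integral>\<^sup>+x. ennreal (indicator {a..<b} (b + - x) * (b - (b + - x)) powr (- lam)) \<partial>lborel)"
    by (rule reflect_nn) measurable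
  also have "\<dots> = (\<integral>\<^sup>+x. ennreal (indicator {0..b-a} x * x powr (- lam)) \<partial>lborel)"
    by (intro nn_integral_cong_AE eventually_mono[OF AE_lborel_singleton[of 0]]) (auto simp: indicator_def)
  also have "\<dots> = ennreal ((b - a) powr (- lam + 1) / (- lam + 1))"
    by (rule nn_pow_head) (use lam ab in auto)
  finally show ?thesis by (simp add: add.commute)
qed


definition Phi :: "real \<Rightarrow> real set \<Rightarrow> real \<Rightarrow> ennreal" where
  "Phi lam E x = (\<integral>\<^sup>+z. ennreal (indicator E (x + z) * kern lam z) \<partial>lborel)"
definition Phic :: "real \<Rightarrow> real set \<Rightarrow> real \<Rightarrow> ennreal" where
  "Phic lam E x = (\<integral>\<^sup>+z. ennreal ((1 - indicator E (x + z)) * kern lam z) \<partial>lborel)"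

lemma Phi_meas[measurable]: assumes [measurable]: "E \<in> sets borel" shows "Phi lam E \<in> borel_measurable borel"
  unfolding Phi_def by measurable

lemma Phic_meas[measurable]: assumes [measurable]: "E \<in> sets borel" shows "Phic lam E \<in> borel_measurable borel"
  unfolding Phic_def by measurable

lemma K5: assumes lam: "0 < lam" "lam < 1" and ab: "a < b"
  shows "(\<integral>\<^sup>+x. ennreal (indicator {a..<b} x) * Phic lam {a..<b} x \<partial>lborel)
     = ennreal (2 * (b - a) powr (1 - lam) / (lam * (1 - lam)))"
proof -
  have "(\<integral>\<^sup>+x. ennreal (indicator {a..<b} x) * Phic lam {a..<b} x \<partial>lborel)
     = (\<integral>\<^sup>+x. ennreal ((1/lam) * (indicator {a..<b} x * (x - a) powr (- lam) + indicator {a..<b} x * (b - x) powr (- lam))) \<partial>lborel)"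
  proof (intro nn_integral_cong_AE eventually_mono[OF AE_lborel_singleton[of a]] impI)
    fix x assume "x \<noteq> a"
    show "ennreal (indicator {a..<b} x) * Phic lam {a..<b} x =
      ennreal ((1/lam) * (indicator {a..<b} x * (x - a) powr (- lam) + indicator {a..<b} x * (b - x) powr (- lam)))"
    proof (cases "x \<in> {a..<b}")
      case True
      then have "a < x" "x < b" using \<open>x \<noteq> a\<close> by auto
      then show ?thesis unfolding Phic_def using K3[OF lam(1) \<open>a < x\<close> \<open>x < b\<close>] True
        by (simp add: field_simps)
    qed simp
  qed
  also have "\<dots> = ennreal (1/lam) * ((\<integral>\<^sup>+x. ennreal (indicator {a..<b} x * (x - a) powr (- lam)) \<partial>lborel)
       + (\<integral>\<^sup>+x. ennreal (indicator {a..<b} x * (b - x) powr (- lam)) \<partial>lborel))"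
  proof -
    have "(\<integral>\<^sup>+x. ennreal (indicator {a..<b} x * (x - a) powr (- lam) + indicator {a..<b} x * (b - x) powr (- lam)) \<partial>lborel)
       = (\<integral>\<^sup>+x. ennreal (indicator {a..<b} x * (x - a) powr (- lam)) + ennreal (indicator {a..<b} x * (b - x) powr (- lam)) \<partial>lborel)"
      by (rule nn_integral_cong) (simp add: ennreal_plus)
    also have "\<dots> = (\<integral>\<^sup>+x. ennreal (indicator {a..<b} x * (x - a) powr (- lam)) \<partial>lborel)
       + (\<integral>\<^sup>+x. ennreal (indicator {a..<b} x * (b - x) powr (- lam)) \<partial>lborel)"
      by (rule nn_integral_add) measurable
    finally show ?thesis using lam by (subst nn_cmult) auto
  qed
  also have "\<dots> = ennreal (1/lam) * (ennreal ((b - a) powr (1 - lam) / (1 - lam)) + ennreal ((b - a) powr (1 - lam) / (1 - lam)))"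
    using K4a[OF lam ab] K4b[OF lam ab] by simp
  also have "\<dots> = ennreal (1/lam * ((b - a) powr (1 - lam) / (1 - lam) + (b - a) powr (1 - lam) / (1 - lam)))"
    using lam by (simp add: ennreal_plus[symmetric] ennreal_mult[symmetric] del: ennreal_plus)
  also have "1/lam * ((b - a) powr (1 - lam) / (1 - lam) + (b - a) powr (1 - lam) / (1 - lam)) = 2 * (b - a) powr (1 - lam) / (lam * (1 - lam))"
  proof -
    have "1/l * (P/m + P/m) = 2*P/(l*m)" for l m P :: real by (simp add: add_divide_distrib[symmetric])
    then show ?thesis .
  qed
  finally show ?thesis .
qed


lemma sym_nn: fixes f :: "real \<Rightarrow> real" assumes [measurable]: "f \<in> borel_measurable borel" and f0: "\<And>z. f z \<ge> 0"
  shows "(\<integral>\<^sup>+z. ennreal (f z + f (- z)) \<partial>lborel) = 2 * (\<integral>\<^sup>+z. ennreal (f z) \<partial>lborel)"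
proof -
  have "(\<integral>\<^sup>+z. ennreal (f z + f (- z)) \<partial>lborel) = (\<integral>\<^sup>+z. ennreal (f z) + ennreal (f (- z)) \<partial>lborel)"
    by (rule nn_integral_cong) (simp add: ennreal_plus f0)
  also have "\<dots> = (\<integral>\<^sup>+z. ennreal (f z) \<partial>lborel) + (\<integral>\<^sup>+z. ennreal (f (- z)) \<partial>lborel)"
    by (rule nn_integral_add) measurable
  also have "(\<integral>\<^sup>+z. ennreal (f (- z)) \<partial>lborel) = (\<integral>\<^sup>+z. ennreal (f z) \<partial>lborel)"
    by (rule reflect_nn[symmetric]) measurable
  finally show ?thesis by (simp add: mult_2)
qed

lemma set_int_nn: fixes f :: "real \<Rightarrow> real" assumes [measurable]: "f \<in> borel_measurable borel" "S \<in> sets borel"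
  and f0: "\<And>z. f z \<ge> 0"
  shows "(LINT z:S|lborel. f z) = enn2real (\<integral>\<^sup>+z. ennreal (indicator S z * f z) \<partial>lborel)"
  unfolding set_lebesgue_integral_def by (subst integral_eq_nn_integral) (auto simp: f0)

lemma d_lam_val: assumes lam: "0 < lam" "lam < 1"
  shows "d_lam c lam = c * (2 / (1 - lam) + 2 / lam)"
proof -
  have m1: "(\<integral>\<^sup>+z. ennreal (indicator {z. \<bar>z\<bar> < 1} z * \<bar>z\<bar> powr (- lam)) \<partial>lborel) = ennreal (2 / (1 - lam))"
  proof -
    have "(\<integral>\<^sup>+z. ennreal (indicator {z. \<bar>z\<bar> < 1} z * \<bar>z\<bar> powr (- lam)) \<partial>lborel)
       = (\<integral>\<^sup>+z. ennreal (indicator {0..1} z * z powr (- lam) + indicator {0..1} (- z) * (- z) powr (- lam)) \<partial>lborel)"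
      by (intro nn_integral_cong_AE eventually_mono[OF eventually_conj[OF AE_lborel_singleton[of 1] AE_lborel_singleton[of "-1"]]])
         (auto simp: indicator_def)
    also have "\<dots> = 2 * (\<integral>\<^sup>+z. ennreal (indicator {0..1} z * z powr (- lam)) \<partial>lborel)"
      by (rule sym_nn) auto
    also have "\<dots> = 2 * ennreal (1 powr (- lam + 1) / (- lam + 1))"
      by (subst nn_pow_head) (use lam in auto)
    finally show ?thesis using lam by (simp add: ennreal_mult[symmetric] ennreal_numeral[symmetric] del: ennreal_numeral)
  qed
  have m2: "(\<integral>\<^sup>+z. ennreal (indicator {z. \<bar>z\<bar> > 1} z * \<bar>z\<bar> powr (- 1 - lam)) \<partial>lborel) = ennreal (2 / lam)"
  proof -
    have "(\<integral>\<^sup>+z. ennreal (indicator {z. \<bar>z\<bar> > 1} z * \<bar>z\<bar> powr (- 1 - lam)) \<partial>lborel)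
       = (\<integral>\<^sup>+z. ennreal (indicator {1..} z * z powr (- 1 - lam) + indicator {1..} (- z) * (- z) powr (- 1 - lam)) \<partial>lborel)"
      by (intro nn_integral_cong_AE eventually_mono[OF eventually_conj[OF AE_lborel_singleton[of 1] AE_lborel_singleton[of "-1"]]])
         (auto simp: indicator_def)
    also have "\<dots> = 2 * (\<integral>\<^sup>+z. ennreal (indicator {1..} z * z powr (- 1 - lam)) \<partial>lborel)"
      by (rule sym_nn) auto
    also have "\<dots> = 2 * ennreal (- (1 powr (- 1 - lam + 1)) / (- 1 - lam + 1))"
      by (subst nn_pow_tail) (use lam in auto)
    finally show ?thesis using lam by (simp add: ennreal_mult[symmetric] ennreal_numeral[symmetric] del: ennreal_numeral)
  qed
  have "(LINT z:{z. \<bar>z\<bar> < 1}|lborel. \<bar>z\<bar> powr (- lam)) = 2 / (1 - lam)"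
    by (subst set_int_nn) (use m1 lam in auto)
  moreover have "(LINT z:{z. \<bar>z\<bar> > 1}|lborel. \<bar>z\<bar> powr (- 1 - lam)) = 2 / lam"
    by (subst set_int_nn) (use m2 lam in auto)
  ultimately show ?thesis unfolding d_lam_def by simp
qed


lemma cell_borel[measurable]: "cell dx i \<in> sets borel" unfolding cell_def by simp

lemma setint_UNIV0: fixes f :: "real \<Rightarrow> real" assumes "f 0 = 0"
  shows "(LINT z:{z. \<bar>z\<bar> > 0}|lborel. f z) = (LINT z|lborel. f z)"
  unfolding set_lebesgue_integral_def by (rule Bochner_Integration.integral_cong) (use assms in \<open>auto simp: indicator_def\<close>)

lemma N1: assumes [measurable]: "E \<in> sets borel" and x: "x \<notin> E"
  shows "nonlocalL c lam (indicator E) x = c * enn2real (Phi lam E x)"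
proof -
  have "(LINT z:{z. \<bar>z\<bar> > 0}|lborel. (indicator E (x + z) - indicator E x) / \<bar>z\<bar> powr (1 + lam))
      = (LINT z|lborel. indicator E (x + z) * kern lam z)"
    by (subst setint_UNIV0) (use x in \<open>auto simp: kern_def indicator_def\<close>)
  also have "\<dots> = enn2real (Phi lam E x)"
    unfolding Phi_def by (subst integral_eq_nn_integral) (auto simp: kern_nonneg)
  finally show ?thesis unfolding nonlocalL_def by simp
qed

lemma N2: assumes [measurable]: "E \<in> sets borel" and x: "x \<in> E"
  shows "nonlocalL c lam (indicator E) x = - c * enn2real (Phic lam E x)"
proof -
  have "(LINT z:{z. \<bar>z\<bar> > 0}|lborel. (indicator E (x + z) - indicator E x) / \<bar>z\<bar> powr (1 + lam))
      = (LINT z|lborel. (indicator E (x + z) - indicator E x) / \<bar>z\<bar> powr (1 + lam))"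
    by (rule setint_UNIV0) simp
  also have "\<dots> = (LINT z|lborel. - ((1 - indicator E (x + z)) * kern lam z))"
    by (rule Bochner_Integration.integral_cong) (use x in \<open>auto simp: kern_def indicator_def\<close>)
  also have "\<dots> = - (LINT z|lborel. (1 - indicator E (x + z)) * kern lam z)"
    by (rule integral_minus)
  also have "(LINT z|lborel. (1 - indicator E (x + z)) * kern lam z) = enn2real (Phic lam E x)"
    unfolding Phic_def by (subst integral_eq_nn_integral) (auto simp: kern_nonneg indicator_def)
  finally show ?thesis unfolding nonlocalL_def by simp
qed

lemma conv_enn: fixes F :: "real \<Rightarrow> ennreal"
  assumes [measurable]: "F \<in> borel_measurable borel" "S \<in> sets borel" and fin: "(\<integral>\<^sup>+x. ennreal (indicator S x) * F x \<partial>lborel) \<noteq> \<infinity>"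
    and c: "c \<ge> 0"
  shows "(LINT x|lborel. indicator S x * (c * enn2real (F x))) = c * enn2real (\<integral>\<^sup>+x. ennreal (indicator S x) * F x \<partial>lborel)"
proof -
  have ae: "AE x in lborel. ennreal (indicator S x) * F x \<noteq> \<infinity>"
    by (rule nn_integral_PInf_AE) (use fin in auto)
  have "(LINT x|lborel. indicator S x * (c * enn2real (F x))) = enn2real (\<integral>\<^sup>+x. ennreal (indicator S x * (c * enn2real (F x))) \<partial>lborel)"
    by (subst integral_eq_nn_integral) (auto simp: c)
  also have "(\<integral>\<^sup>+x. ennreal (indicator S x * (c * enn2real (F x))) \<partial>lborel) = (\<integral>\<^sup>+x. ennreal c * (ennreal (indicator S x) * F x) \<partial>lborel)"
  proof (rule nn_integral_cong_AE, rule eventually_mono[OF ae])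
    fix x assume h: "ennreal (indicator S x) * F x \<noteq> \<infinity>"
    show "ennreal (indicator S x * (c * enn2real (F x))) = ennreal c * (ennreal (indicator S x) * F x)"
    proof (cases "x \<in> S")
      case True
      then have "F x \<noteq> \<infinity>" using h by simp
      then show ?thesis using True c by (simp add: ennreal_mult ennreal_enn2real_if)
    qed simp
  qed
  also have "\<dots> = ennreal c * (\<integral>\<^sup>+x. ennreal (indicator S x) * F x \<partial>lborel)"
    by (rule nn_integral_cmult) measurable
  finally show ?thesis using c by (simp add: enn2real_mult)
qed

definition Psi :: "real \<Rightarrow> real \<Rightarrow> int \<Rightarrow> int \<Rightarrow> ennreal" where
  "Psi lam dx i j = (\<integral>\<^sup>+x. ennreal (indicator (cell dx i) x) * Phi lam (cell dx j) x \<partial>lborel)"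
definition Psic :: "real \<Rightarrow> real \<Rightarrow> int \<Rightarrow> ennreal" where
  "Psic lam dx i = (\<integral>\<^sup>+x. ennreal (indicator (cell dx i) x) * Phic lam (cell dx i) x \<partial>lborel)"

lemma Psic_val: assumes lam: "0 < lam" "lam < 1" and dx: "dx > 0"
  shows "Psic lam dx i = ennreal (2 * dx powr (1 - lam) / (lam * (1 - lam)))"
proof -
  have "Psic lam dx i = ennreal (2 * ((real_of_int i + 1) * dx - real_of_int i * dx) powr (1 - lam) / (lam * (1 - lam)))"
    unfolding Psic_def cell_def by (rule K5[OF lam]) (use dx in \<open>simp add: algebra_simps\<close>)
  then show ?thesis by (simp add: algebra_simps)
qed

lemma cell_disj: "i \<noteq> j \<Longrightarrow> y \<in> cell dx j \<Longrightarrow> dx > 0 \<Longrightarrow> y \<notin> cell dx i"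
proof -
  assume ij: "i \<noteq> j" and yj: "y \<in> cell dx j" and dx: "dx > 0"
  show "y \<notin> cell dx i"
  proof
    assume yi: "y \<in> cell dx i"
    have "real_of_int j * dx < (real_of_int i + 1) * dx" "real_of_int i * dx < (real_of_int j + 1) * dx"
      using yi yj unfolding cell_def by auto
    then have "real_of_int j < real_of_int i + 1" "real_of_int i < real_of_int j + 1"
      using dx by (simp_all add: mult_less_cancel_right)
    then show False using ij by linarith
  qed
qed

lemma Phi_le_Phic: assumes "i \<noteq> j" "dx > 0" shows "Phi lam (cell dx j) x \<le> Phic lam (cell dx i) x"
  unfolding Phi_def Phic_def
  by (intro nn_integral_mono ennreal_leI mult_right_mono kern_nonneg)
     (use cell_disj[OF assms(1)] assms(2) in \<open>auto simp: indicator_def\<close>)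

lemma Psi_le: assumes "i \<noteq> j" "dx > 0" shows "Psi lam dx i j \<le> Psic lam dx i"
  unfolding Psi_def Psic_def
  by (intro nn_integral_mono mult_left_mono Phi_le_Phic assms) auto

lemma G_off: assumes lam: "0 < lam" "lam < 1" and dx: "dx > 0" and c: "c \<ge> 0" and ij: "i \<noteq> j"
  shows "Gw c lam dx i j = c * enn2real (Psi lam dx i j)"
proof -
  have fin: "Psi lam dx i j \<noteq> \<infinity>"
    using Psi_le[OF ij dx, of lam] Psic_val[OF lam dx, of i] by (auto simp: top_unique)
  have "Gw c lam dx i j = (LINT x|lborel. indicator (cell dx i) x * (c * enn2real (Phi lam (cell dx j) x)))"
    unfolding Gw_def set_lebesgue_integral_def
    by (rule Bochner_Integration.integral_cong) (use N1 cell_disj[OF ij[symmetric] _ dx] in \<open>auto simp: indicator_def\<close>)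
  also have "\<dots> = c * enn2real (Psi lam dx i j)"
    unfolding Psi_def by (rule conv_enn) (use fin c in \<open>auto simp: Psi_def\<close>)
  finally show ?thesis .
qed

lemma G_diag: assumes lam: "0 < lam" "lam < 1" and dx: "dx > 0" and c: "c \<ge> 0"
  shows "Gw c lam dx i i = - c * (2 * dx powr (1 - lam) / (lam * (1 - lam)))"
proof -
  have fin: "Psic lam dx i \<noteq> \<infinity>" using Psic_val[OF lam dx, of i] by simp
  have "Gw c lam dx i i = (LINT x|lborel. - (indicator (cell dx i) x * (c * enn2real (Phic lam (cell dx i) x))))"
    unfolding Gw_def set_lebesgue_integral_def
    by (rule Bochner_Integration.integral_cong) (use N2 in \<open>auto simp: indicator_def\<close>)
  also have "\<dots> = - (c * enn2real (Psic lam dx i))"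
    unfolding Psic_def by (subst integral_minus, subst conv_enn) (use fin c in \<open>auto simp: Psic_def\<close>)
  finally show ?thesis using Psic_val[OF lam dx, of i] lam dx by simp
qed


lemma cell_shift: "y + real_of_int k * dx \<in> cell dx (j + k) \<longleftrightarrow> y \<in> cell dx j"
  unfolding cell_def by (auto simp: algebra_simps)

lemma Psi_shift: "Psi lam dx (i + k) (j + k) = Psi lam dx i j"
proof -
  have "Psi lam dx (i + k) (j + k) = (\<integral>\<^sup>+x. ennreal (indicator (cell dx (i+k)) (real_of_int k * dx + x)) * Phi lam (cell dx (j+k)) (real_of_int k * dx + x) \<partial>lborel)"
    unfolding Psi_def by (rule translate_nn) measurable
  also have "\<dots> = Psi lam dx i j"
    unfolding Psi_def
  proof (rule nn_integral_cong)
    fix x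
    have "indicator (cell dx (i+k)) (real_of_int k * dx + x) = (indicator (cell dx i) x :: real)"
      using cell_shift[of x k dx i] by (simp add: indicator_def add.commute)
    moreover have "Phi lam (cell dx (j+k)) (real_of_int k * dx + x) = Phi lam (cell dx j) x"
      unfolding Phi_def
    proof (rule nn_integral_cong)
      fix z
      have "indicator (cell dx (j+k)) (real_of_int k * dx + x + z) = (indicator (cell dx j) (x + z) :: real)"
        using cell_shift[of "x + z" k dx j] by (simp add: indicator_def add_ac)
      then show "ennreal (indicator (cell dx (j+k)) (real_of_int k * dx + x + z) * kern lam z) = ennreal (indicator (cell dx j) (x + z) * kern lam z)"
        by simp
    qed
    ultimately show "ennreal (indicator (cell dx (i+k)) (real_of_int k * dx + x)) * Phi lam (cell dx (j+k)) (real_of_int k * dx + x)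
        = ennreal (indicator (cell dx i) x) * Phi lam (cell dx j) x" by simp
  qed
  finally show ?thesis .
qed

lemma G_rel: assumes lam: "0 < lam" "lam < 1" and dx: "dx > 0" and c: "c \<ge> 0"
  shows "Gw c lam dx i j = Gw c lam dx 0 (j - i)"
proof (cases "i = j")
  case True then show ?thesis using G_diag[OF lam dx c] by simp
next
  case False
  have "Psi lam dx i j = Psi lam dx (0 + i) ((j - i) + i)" by simp
  also have "\<dots> = Psi lam dx 0 (j - i)" by (rule Psi_shift)
  finally show ?thesis using G_off[OF lam dx c False] G_off[OF lam dx c, of 0 "j - i"] False by simp
qed

lemma ind_floor: assumes dx: "dx > 0" shows "indicator (cell dx j) y = (if \<lfloor>y / dx\<rfloor> = j then 1 else (0::real))"
proof -
  have "y \<in> cell dx j \<longleftrightarrow> \<lfloor>y / dx\<rfloor> = j"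
    unfolding cell_def floor_eq_iff using dx by (auto simp: pos_le_divide_eq pos_divide_less_eq)
  then show ?thesis by (simp add: indicator_def)
qed

lemma ind_sum: assumes dx: "dx > 0" and F: "finite F"
  shows "(\<Sum>j\<in>F. indicator (cell dx j) y) = (if \<lfloor>y / dx\<rfloor> \<in> F then 1 else (0::real))"
  unfolding ind_floor[OF dx] using F by (simp add: sum.delta)


definition fF :: "real \<Rightarrow> real \<Rightarrow> int set \<Rightarrow> real \<Rightarrow> real \<Rightarrow> ennreal" where
  "fF lam dx F x z = ennreal (indicator (cell dx 0) x * (\<Sum>j\<in>F. indicator (cell dx j) (x + z)) * kern lam z)"

lemma fF_meas[measurable]: "(\<lambda>(x, z). fF lam dx F x z) \<in> borel_measurable (lborel \<Otimes>\<^sub>M lborel)"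
  unfolding fF_def by measurable

lemma fF_meas2[measurable]: "(\<lambda>x. \<integral>\<^sup>+z. fF lam dx F x z \<partial>lborel) \<in> borel_measurable lborel"
  by measurable

lemma fF_meas1[measurable]: "fF lam dx F x \<in> borel_measurable lborel"
  unfolding fF_def by measurable

lemma Psi0_eq: "Psi lam dx 0 j = (\<integral>\<^sup>+x. \<integral>\<^sup>+z. ennreal (indicator (cell dx 0) x * indicator (cell dx j) (x + z) * kern lam z) \<partial>lborel \<partial>lborel)"
  unfolding Psi_def Phi_def
proof (rule nn_integral_cong)
  fix x
  have "ennreal (indicator (cell dx 0) x) * (\<integral>\<^sup>+z. ennreal (indicator (cell dx j) (x + z) * kern lam z) \<partial>lborel)
     = (\<integral>\<^sup>+z. ennreal (indicator (cell dx 0) x) * ennreal (indicator (cell dx j) (x + z) * kern lam z) \<partial>lborel)"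
    by (rule nn_integral_cmult[symmetric]) measurable
  also have "\<dots> = (\<integral>\<^sup>+z. ennreal (indicator (cell dx 0) x * indicator (cell dx j) (x + z) * kern lam z) \<partial>lborel)"
    by (rule nn_integral_cong) (simp add: ennreal_mult kern_nonneg mult.assoc)
  finally show "ennreal (indicator (cell dx 0) x) * (\<integral>\<^sup>+z. ennreal (indicator (cell dx j) (x + z) * kern lam z) \<partial>lborel)
     = (\<integral>\<^sup>+z. ennreal (indicator (cell dx 0) x * indicator (cell dx j) (x + z) * kern lam z) \<partial>lborel)" .
qed

lemma Psic0_eq: "Psic lam dx 0 = (\<integral>\<^sup>+x. \<integral>\<^sup>+z. ennreal (indicator (cell dx 0) x * (1 - indicator (cell dx 0) (x + z)) * kern lam z) \<partial>lborel \<partial>lborel)"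
  unfolding Psic_def Phic_def
proof (rule nn_integral_cong)
  fix x
  have "ennreal (indicator (cell dx 0) x) * (\<integral>\<^sup>+z. ennreal ((1 - indicator (cell dx 0) (x + z)) * kern lam z) \<partial>lborel)
     = (\<integral>\<^sup>+z. ennreal (indicator (cell dx 0) x) * ennreal ((1 - indicator (cell dx 0) (x + z)) * kern lam z) \<partial>lborel)"
    by (rule nn_integral_cmult[symmetric]) measurable
  also have "\<dots> = (\<integral>\<^sup>+z. ennreal (indicator (cell dx 0) x * (1 - indicator (cell dx 0) (x + z)) * kern lam z) \<partial>lborel)"
    by (rule nn_integral_cong) (simp add: ennreal_mult kern_nonneg mult.assoc indicator_def)
  finally show "ennreal (indicator (cell dx 0) x) * (\<integral>\<^sup>+z. ennreal ((1 - indicator (cell dx 0) (x + z)) * kern lam z) \<partial>lborel)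
     = (\<integral>\<^sup>+z. ennreal (indicator (cell dx 0) x * (1 - indicator (cell dx 0) (x + z)) * kern lam z) \<partial>lborel)" .
qed

lemma sumPsi: assumes F: "finite F"
  shows "(\<Sum>j\<in>F. Psi lam dx 0 j) = (\<integral>\<^sup>+x. \<integral>\<^sup>+z. fF lam dx F x z \<partial>lborel \<partial>lborel)"
proof -
  have "(\<Sum>j\<in>F. Psi lam dx 0 j) = (\<integral>\<^sup>+x. (\<Sum>j\<in>F. \<integral>\<^sup>+z. ennreal (indicator (cell dx 0) x * indicator (cell dx j) (x + z) * kern lam z) \<partial>lborel) \<partial>lborel)"
    unfolding Psi0_eq by (rule nn_integral_sum[symmetric]) measurable
  also have "\<dots> = (\<integral>\<^sup>+x. \<integral>\<^sup>+z. fF lam dx F x z \<partial>lborel \<partial>lborel)"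
  proof (rule nn_integral_cong)
    fix x
    have "(\<Sum>j\<in>F. \<integral>\<^sup>+z. ennreal (indicator (cell dx 0) x * indicator (cell dx j) (x + z) * kern lam z) \<partial>lborel)
       = (\<integral>\<^sup>+z. (\<Sum>j\<in>F. ennreal (indicator (cell dx 0) x * indicator (cell dx j) (x + z) * kern lam z)) \<partial>lborel)"
      by (rule nn_integral_sum[symmetric]) measurable
    also have "\<dots> = (\<integral>\<^sup>+z. fF lam dx F x z \<partial>lborel)"
      unfolding fF_def
      by (rule nn_integral_cong) (simp add: kern_nonneg sum_distrib_left sum_distrib_right)
    finally show "(\<Sum>j\<in>F. \<integral>\<^sup>+z. ennreal (indicator (cell dx 0) x * indicator (cell dx j) (x + z) * kern lam z) \<partial>lborel)
       = (\<integral>\<^sup>+z. fF lam dx F x z \<partial>lborel)" .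
  qed
  finally show ?thesis .
qed

lemma fF_le: assumes dx: "dx > 0" and F: "finite F" "0 \<notin> F"
  shows "fF lam dx F x z \<le> ennreal (indicator (cell dx 0) x * (1 - indicator (cell dx 0) (x + z)) * kern lam z)"
  unfolding fF_def ind_sum[OF dx F(1)]
  by (intro ennreal_leI mult_right_mono mult_left_mono kern_nonneg)
     (use F(2) ind_floor[OF dx, of 0 "x + z"] in \<open>auto simp: indicator_def\<close>)

lemma sumPsi_le: assumes dx: "dx > 0" and F: "finite F" "0 \<notin> F"
  shows "(\<Sum>j\<in>F. Psi lam dx 0 j) \<le> Psic lam dx 0"
  unfolding sumPsi[OF F(1)] Psic0_eq
  by (intro nn_integral_mono fF_le[OF dx F])

definition Fn :: "nat \<Rightarrow> int set" where "Fn n = {- int n .. int n} - {0}"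

lemma Fn_fin: "finite (Fn n)" "0 \<notin> Fn n" unfolding Fn_def by auto

lemma Fn_mono: "m \<le> n \<Longrightarrow> Fn m \<subseteq> Fn n" unfolding Fn_def by auto

lemma fF_mono: assumes "m \<le> n" shows "fF lam dx (Fn m) x z \<le> fF lam dx (Fn n) x z"
  unfolding fF_def
  by (intro ennreal_leI mult_right_mono mult_left_mono sum_mono2 Fn_fin Fn_mono assms kern_nonneg)
     (auto simp: indicator_def)

lemma SUP_if_ennreal: assumes "\<exists>n. P n" and mono: "\<And>m n. m \<le> n \<Longrightarrow> P m \<Longrightarrow> P n"
  shows "(SUP n::nat. (if P n then a else (0::ennreal))) = a"
proof (rule antisym)
  show "(SUP n. if P n then a else 0) \<le> a" by (rule SUP_least) auto
  obtain n where "P n" using assms(1) by blast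
  then show "a \<le> (SUP n. if P n then a else 0)" by (intro SUP_upper2[of n]) auto
qed

lemma fF_SUP: assumes dx: "dx > 0"
  shows "(SUP n. fF lam dx (Fn n) x z) = ennreal (indicator (cell dx 0) x * (1 - indicator (cell dx 0) (x + z)) * kern lam z)"
proof -
  define m where "m = \<lfloor>(x + z) / dx\<rfloor>"
  define a where "a = ennreal (indicator (cell dx 0) x * kern lam z)"
  have e: "fF lam dx (Fn n) x z = (if m \<in> Fn n then a else 0)" for n
    unfolding fF_def ind_sum[OF dx Fn_fin(1)] m_def[symmetric] a_def by simp
  show ?thesis
  proof (cases "m = 0")
    case True
    then have "m \<notin> Fn n" for n unfolding Fn_def by simp
    moreover have "indicator (cell dx 0) (x + z) = (1::real)" using ind_floor[OF dx, of 0 "x + z"] True m_def by simp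
    ultimately show ?thesis unfolding e by simp
  next
    case False
    have "indicator (cell dx 0) (x + z) = (0::real)" using ind_floor[OF dx, of 0 "x + z"] False m_def by simp
    moreover have "(SUP n. (if m \<in> Fn n then a else 0)) = a"
    proof (rule SUP_if_ennreal)
      show "\<exists>n. m \<in> Fn n" using False by (intro exI[of _ "nat \<bar>m\<bar>"]) (auto simp: Fn_def)
    qed (use Fn_mono in blast)
    ultimately show ?thesis unfolding e a_def by simp
  qed
qed

lemma Psic_SUP: assumes dx: "dx > 0"
  shows "(SUP n. \<Sum>j\<in>Fn n. Psi lam dx 0 j) = Psic lam dx 0"
proof -
  have inner: "(SUP n. \<integral>\<^sup>+z. fF lam dx (Fn n) x z \<partial>lborel) = (\<integral>\<^sup>+z. (SUP n. fF lam dx (Fn n) x z) \<partial>lborel)" for x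
    by (rule nn_integral_monotone_convergence_SUP[symmetric]) (auto simp: incseq_def le_fun_def intro: fF_mono)
  have "(SUP n. \<Sum>j\<in>Fn n. Psi lam dx 0 j) = (SUP n. \<integral>\<^sup>+x. \<integral>\<^sup>+z. fF lam dx (Fn n) x z \<partial>lborel \<partial>lborel)"
    by (simp add: sumPsi[OF Fn_fin(1)])
  also have "\<dots> = (\<integral>\<^sup>+x. (SUP n. \<integral>\<^sup>+z. fF lam dx (Fn n) x z \<partial>lborel) \<partial>lborel)"
    by (rule nn_integral_monotone_convergence_SUP[symmetric])
       (auto simp: incseq_def le_fun_def intro!: nn_integral_mono fF_mono)
  also have "\<dots> = Psic lam dx 0"
    unfolding Psic0_eq inner fF_SUP[OF dx] ..
  finally show ?thesis .
qed


context fixes c lam dx :: real assumes lam: "0 < lam" "lam < 1" and dx: "dx > 0" and c: "c > 0"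
begin

lemma Psi_fin: "j \<noteq> 0 \<Longrightarrow> Psi lam dx 0 j < top"
  using Psi_le[of 0 j dx lam] dx Psic_val[OF lam dx, of 0] by (metis ennreal_less_top le_less_trans)

lemma g_nonneg: "k \<noteq> 0 \<Longrightarrow> Gw c lam dx 0 k \<ge> 0"
  using G_off[OF lam dx, of c 0 k] c by simp

lemma g_zero: "Gw c lam dx 0 0 = - c * (2 * dx powr (1 - lam) / (lam * (1 - lam)))"
  using G_diag[OF lam dx, of c 0] c by simp

lemma g_fsum: assumes F: "finite F" "0 \<notin> F"
  shows "ennreal (\<Sum>k\<in>F. Gw c lam dx 0 k) = ennreal c * (\<Sum>j\<in>F. Psi lam dx 0 j)"
proof -
  have nz: "\<And>i. i \<in> F \<Longrightarrow> i \<noteq> 0" using F(2) by auto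
  have c0: "c \<ge> 0" using c by simp
  have "(\<Sum>k\<in>F. Gw c lam dx 0 k) = (\<Sum>k\<in>F. c * enn2real (Psi lam dx 0 k))"
    by (rule sum.cong) (use nz G_off[OF lam dx c0, of 0] in auto)
  also have "\<dots> = c * (\<Sum>k\<in>F. enn2real (Psi lam dx 0 k))" by (simp add: sum_distrib_left)
  also have "(\<Sum>k\<in>F. enn2real (Psi lam dx 0 k)) = enn2real (\<Sum>j\<in>F. Psi lam dx 0 j)"
    using enn2real_sum[of F "Psi lam dx 0"] nz Psi_fin by (simp add: comp_def)
  finally have "(\<Sum>k\<in>F. Gw c lam dx 0 k) = c * enn2real (\<Sum>j\<in>F. Psi lam dx 0 j)" .
  moreover have "(\<Sum>j\<in>F. Psi lam dx 0 j) \<noteq> top"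
    using sumPsi_le[OF dx F, of lam] Psic_val[OF lam dx, of 0] by (auto simp: top_unique)
  ultimately show ?thesis using c by (simp add: ennreal_mult ennreal_enn2real_if)
qed

lemma g_T: "Gw c lam dx 0 summable_on (UNIV - {0})"
      "infsum (Gw c lam dx 0) (UNIV - {0}) = c * (2 * dx powr (1 - lam) / (lam * (1 - lam)))"
proof -
  let ?g = "Gw c lam dx 0" and ?T = "UNIV - {0::int}"
  define V where "V = c * (2 * dx powr (1 - lam) / (lam * (1 - lam)))"
  have V0: "V \<ge> 0" unfolding V_def using c lam dx by simp
  have PV: "ennreal c * Psic lam dx 0 = ennreal V"
    unfolding V_def Psic_val[OF lam dx] using c lam dx by (subst ennreal_mult[symmetric]) auto
  have fs: "sum ?g F \<le> V" if "finite F" "F \<subseteq> ?T" for F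
  proof -
    have "ennreal (sum ?g F) = ennreal c * (\<Sum>j\<in>F. Psi lam dx 0 j)" using g_fsum that by blast
    also have "\<dots> \<le> ennreal c * Psic lam dx 0"
    proof (rule mult_left_mono)
      show "(\<Sum>j\<in>F. Psi lam dx 0 j) \<le> Psic lam dx 0" using sumPsi_le[OF dx, of F lam] that by auto
    qed simp
    finally show ?thesis using PV V0 by (simp add: ennreal_le_iff)
  qed
  show s: "?g summable_on ?T"
    by (rule nonneg_bdd_above_summable_on) (use g_nonneg fs in \<open>auto intro!: bdd_aboveI\<close>)
  have "ennreal (infsum ?g ?T) = (SUP F\<in>{F. finite F \<and> F \<subseteq> ?T}. ennreal (sum ?g F))"
    by (rule infsum_nonneg_is_SUPREMUM_ennreal[OF s]) (use g_nonneg in auto)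
  also have "\<dots> = ennreal V"
  proof (rule antisym)
    show "(SUP F\<in>{F. finite F \<and> F \<subseteq> ?T}. ennreal (sum ?g F)) \<le> ennreal V"
      by (rule SUP_least) (use fs in \<open>auto intro: ennreal_leI\<close>)
    have "ennreal V = ennreal c * (SUP n. \<Sum>j\<in>Fn n. Psi lam dx 0 j)" using Psic_SUP[OF dx] PV by simp
    also have "\<dots> = (SUP n. ennreal c * (\<Sum>j\<in>Fn n. Psi lam dx 0 j))" by (rule SUP_mult_left_ennreal)
    also have "\<dots> \<le> (SUP F\<in>{F. finite F \<and> F \<subseteq> ?T}. ennreal (sum ?g F))"
    proof (rule SUP_least)
      fix n
      have "ennreal c * (\<Sum>j\<in>Fn n. Psi lam dx 0 j) = ennreal (sum ?g (Fn n))" using g_fsum[OF Fn_fin] by simp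
      also have "\<dots> \<le> (SUP F\<in>{F. finite F \<and> F \<subseteq> ?T}. ennreal (sum ?g F))"
        by (rule SUP_upper) (use Fn_fin in auto)
      finally show "ennreal c * (\<Sum>j\<in>Fn n. Psi lam dx 0 j) \<le> (SUP F\<in>{F. finite F \<and> F \<subseteq> ?T}. ennreal (sum ?g F))" .
    qed
    finally show "ennreal V \<le> (SUP F\<in>{F. finite F \<and> F \<subseteq> ?T}. ennreal (sum ?g F))" .
  qed
  finally have "ennreal (infsum ?g ?T) = ennreal V" .
  moreover have "infsum ?g ?T \<ge> 0" by (rule infsum_nonneg) (use g_nonneg in auto)
  ultimately show "infsum ?g ?T = V" using V0 by simp
qed

lemma g_summable: "Gw c lam dx 0 summable_on UNIV"
proof -
  have "UNIV = insert (0::int) (UNIV - {0})" by auto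
  then show ?thesis using g_T(1) summable_on_insert_iff by metis
qed

lemma g_sum0: "infsum (Gw c lam dx 0) UNIV = 0"
proof -
  have "UNIV = insert (0::int) (UNIV - {0})" by auto
  then have "infsum (Gw c lam dx 0) UNIV = Gw c lam dx 0 0 + infsum (Gw c lam dx 0) (UNIV - {0})"
    using infsum_insert[OF g_T(1), of 0] by simp
  then show ?thesis using g_T(2) g_zero by simp
qed

end



lemma ev0: "\<forall>\<^sub>F h in at (0::real). h \<noteq> 0" by (simp add: eventually_at_filter)

lemma deriv_lip: fixes f :: "real \<Rightarrow> real"
  assumes d: "DERIV f x :> l" and L: "\<And>s t. \<bar>f s - f t\<bar> \<le> L * \<bar>s - t\<bar>"
  shows "\<bar>l\<bar> \<le> L"
proof -
  have t: "((\<lambda>h. \<bar>(f (x + h) - f x) / h\<bar>) \<longlongrightarrow> \<bar>l\<bar>) (at 0)"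
    using d unfolding DERIV_def by (rule tendsto_rabs)
  show ?thesis
  proof (rule tendsto_upperbound[OF t])
    show "\<forall>\<^sub>F h in at 0. \<bar>(f (x + h) - f x) / h\<bar> \<le> L"
    proof (rule eventually_mono[OF ev0])
      fix h :: real assume h: "h \<noteq> 0"
      have "\<bar>f (x + h) - f x\<bar> \<le> L * \<bar>h\<bar>" using L[of "x + h" x] by simp
      then show "\<bar>(f (x + h) - f x) / h\<bar> \<le> L" using h by (simp add: abs_divide divide_le_eq)
    qed
  qed simp
qed

lemma deriv_mono: fixes f :: "real \<Rightarrow> real"
  assumes d: "DERIV f x :> l" and m: "\<And>s t. s \<le> t \<Longrightarrow> f s \<le> f t"
  shows "0 \<le> l"
proof -
  have t: "((\<lambda>h. (f (x + h) - f x) / h) \<longlongrightarrow> l) (at 0)" using d unfolding DERIV_def .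
  show ?thesis
  proof (rule tendsto_lowerbound[OF t])
    show "\<forall>\<^sub>F h in at 0. 0 \<le> (f (x + h) - f x) / h"
    proof (rule eventually_mono[OF ev0])
      fix h :: real assume h: "h \<noteq> 0"
      show "0 \<le> (f (x + h) - f x) / h"
      proof (cases "h > 0")
        case True then show ?thesis using m[of x "x + h"] by simp
      next
        case False then have "h < 0" using h by simp
        then show ?thesis using m[of "x + h" x] by (simp add: divide_nonpos_neg)
      qed
    qed
  qed simp
qed

lemma mvt_q: fixes f f' :: "real \<Rightarrow> real"
  assumes d: "\<And>x. DERIV f x :> f' x" and nn: "\<And>x. 0 \<le> f' x" and P: "\<And>x. f' x \<le> P"
  shows "\<exists>q. 0 \<le> q \<and> q \<le> P \<and> f b - f a = q * (b - a)"
proof (cases a b rule: linorder_cases)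
  case less
  obtain z where "f b - f a = (b - a) * f' z" using MVT2[OF less d] by blast
  then show ?thesis using nn[of z] P[of z] by (intro exI[of _ "f' z"]) (simp add: mult.commute)
next
  case equal then show ?thesis using nn[of a] P[of a] by (intro exI[of _ 0]) simp
next
  case greater
  obtain z where "f a - f b = (a - b) * f' z" using MVT2[OF greater d] by blast
  then have "f b - f a = f' z * (b - a)" by (simp add: algebra_simps)
  then show ?thesis using nn[of z] P[of z] by (intro exI[of _ "f' z"]) simp
qed


lemma lip_fst: assumes "L-lipschitz_on UNIV (\<lambda>p::real\<times>real. fh (fst p) (snd p))"
  shows "\<bar>fh s y - fh t y\<bar> \<le> L * \<bar>s - t\<bar>" and "\<bar>fh x s - fh x t\<bar> \<le> L * \<bar>s - t\<bar>"
proof -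
  show "\<bar>fh s y - fh t y\<bar> \<le> L * \<bar>s - t\<bar>"
    using lipschitz_onD[OF assms, of "(s, y)" "(t, y)"] by (simp add: dist_Pair_Pair dist_real_def)
  show "\<bar>fh x s - fh x t\<bar> \<le> L * \<bar>s - t\<bar>"
    using lipschitz_onD[OF assms, of "(x, s)" "(x, t)"] by (simp add: dist_Pair_Pair dist_real_def)
qed

lemma fh_q1: assumes C1: "C1_2 fh" and lip: "L-lipschitz_on UNIV (\<lambda>p::real\<times>real. fh (fst p) (snd p))"
  and m1: "\<forall>x y z. x \<le> y \<longrightarrow> fh x z \<le> fh y z"
  shows "\<exists>q. 0 \<le> q \<and> q \<le> (SUP p::real\<times>real. \<bar>partial1 fh (fst p) (snd p)\<bar>) \<and> fh x' y - fh x y = q * (x' - x)"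
proof -
  have d: "DERIV (\<lambda>s. fh s y) s :> partial1 fh s y" for s y
    using C1 unfolding C1_2_def partial1_def by (simp add: DERIV_deriv_iff_real_differentiable)
  have b: "\<bar>partial1 fh s y\<bar> \<le> L" for s y by (rule deriv_lip[OF d lip_fst(1)[OF lip]])
  have bdd: "bdd_above (range (\<lambda>p::real\<times>real. \<bar>partial1 fh (fst p) (snd p)\<bar>))"
    by (rule bdd_aboveI[of _ L]) (use b in auto)
  have up: "partial1 fh s y \<le> (SUP p::real\<times>real. \<bar>partial1 fh (fst p) (snd p)\<bar>)" for s y
    using cSUP_upper[OF UNIV_I bdd, of "(s, y)"] by simp
  have nn: "0 \<le> partial1 fh s y" for s y by (rule deriv_mono[OF d]) (use m1 in auto)
  show ?thesis by (rule mvt_q[OF d nn up])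
qed

lemma fh_q2: assumes C1: "C1_2 fh" and lip: "L-lipschitz_on UNIV (\<lambda>p::real\<times>real. fh (fst p) (snd p))"
  and m2: "\<forall>x y z. x \<le> y \<longrightarrow> fh z x \<ge> fh z y"
  shows "\<exists>q. 0 \<le> q \<and> q \<le> (SUP p::real\<times>real. \<bar>partial2 fh (fst p) (snd p)\<bar>) \<and> fh x y' - fh x y = - q * (y' - y)"
proof -
  have d0: "DERIV (\<lambda>s. fh x s) s :> partial2 fh x s" for s x
    using C1 unfolding C1_2_def partial2_def by (simp add: DERIV_deriv_iff_real_differentiable)
  have d: "DERIV (\<lambda>s. - fh x s) s :> - partial2 fh x s" for s x by (rule DERIV_minus[OF d0])
  have b: "\<bar>partial2 fh x s\<bar> \<le> L" for s x by (rule deriv_lip[OF d0 lip_fst(2)[OF lip]])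
  have bdd: "bdd_above (range (\<lambda>p::real\<times>real. \<bar>partial2 fh (fst p) (snd p)\<bar>))"
    by (rule bdd_aboveI[of _ L]) (use b in auto)
  have up: "- partial2 fh x s \<le> (SUP p::real\<times>real. \<bar>partial2 fh (fst p) (snd p)\<bar>)" for s x
    using cSUP_upper[OF UNIV_I bdd, of "(x, s)"] by simp
  have nn: "0 \<le> - partial2 fh x s" for s x by (rule deriv_mono[OF d]) (use m2 in auto)
  obtain q where "0 \<le> q \<and> q \<le> (SUP p::real\<times>real. \<bar>partial2 fh (fst p) (snd p)\<bar>) \<and> (- fh x y') - (- fh x y) = q * (y' - y)"
    using mvt_q[OF d nn up] by blast
  then show ?thesis by (intro exI[of _ q]) (auto simp: algebra_simps)
qed

lemma Aint_deriv: assumes ca: "continuous_on UNIV a" shows "DERIV (Aint a) x :> a x"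
proof -
  define lo where "lo = min 0 x - 1"
  define hi where "hi = max 0 x + 1"
  have "((\<lambda>u. interval_lebesgue_integral lborel (ereal 0) (ereal u) a) has_vector_derivative a x) (at x within {lo..hi})"
    using interval_integral_FTC2[of lo 0 hi a x] continuous_on_subset[OF ca, of "{lo..hi}"]
    by (auto simp: lo_def hi_def)
  moreover have "at x within {lo..hi} = at x"
    by (rule at_within_interior) (auto simp: lo_def hi_def)
  ultimately have "((\<lambda>u. interval_lebesgue_integral lborel (ereal 0) (ereal u) a) has_vector_derivative a x) (at x)" by simp
  then show ?thesis unfolding Aint_def by (simp add: has_real_derivative_iff_has_vector_derivative)
qed

lemma A_q: assumes ca: "continuous_on UNIV a" and nn: "\<forall>s. a s \<ge> 0" and bd: "bounded (range a)"
  shows "\<exists>q. 0 \<le> q \<and> q \<le> (SUP s. \<bar>a s\<bar>) \<and> Aint a v - Aint a u = q * (v - u)"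
proof -
  obtain B where B: "\<And>s. \<bar>a s\<bar> \<le> B" using bd unfolding bounded_real by auto
  have bdd: "bdd_above (range (\<lambda>s. \<bar>a s\<bar>))" by (rule bdd_aboveI[of _ B]) (use B in auto)
  have up: "a s \<le> (SUP s. \<bar>a s\<bar>)" for s using cSUP_upper[OF UNIV_I bdd, of s] by simp
  show ?thesis by (rule mvt_q[OF Aint_deriv[OF ca]]) (use nn up in auto)
qed

lemma Aint0: "Aint a 0 = 0" unfolding Aint_def by (simp add: zero_ereal_def)


lemma U_init_summable: assumes dx: "dx > 0" and u0: "integrable lborel u0"
  shows "U_init dx u0 summable_on UNIV"
proof -
  define h where "h i = (LINT x:cell dx i|lborel. \<bar>u0 x\<bar>)" for i
  have si: "set_integrable lborel (cell dx i) u0" for i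
    unfolding set_integrable_def by (rule integrable_mult_indicator) (auto simp: u0)
  have sa: "integrable lborel (\<lambda>x. indicator (cell dx i) x *\<^sub>R \<bar>u0 x\<bar>)" for i
    by (rule integrable_mult_indicator) (auto intro: integrable_abs u0)
  have hb: "\<bar>LINT x:cell dx i|lborel. u0 x\<bar> \<le> h i" for i
    unfolding h_def using set_integral_norm_bound[OF si[of i]] by simp
  have hnn: "h i \<ge> 0" for i unfolding h_def set_lebesgue_integral_def by (rule Bochner_Integration.integral_nonneg) auto
  have hF: "sum h F \<le> (LINT x|lborel. \<bar>u0 x\<bar>)" if F: "finite F" for F
  proof -
    have "sum h F = (LINT x|lborel. (\<Sum>i\<in>F. indicator (cell dx i) x *\<^sub>R \<bar>u0 x\<bar>))"
      unfolding h_def set_lebesgue_integral_def by (rule Bochner_Integration.integral_sum[symmetric]) (use sa in auto)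
    also have "\<dots> \<le> (LINT x|lborel. \<bar>u0 x\<bar>)"
    proof (rule integral_mono)
      show "integrable lborel (\<lambda>x. \<Sum>i\<in>F. indicator (cell dx i) x *\<^sub>R \<bar>u0 x\<bar>)" using sa by auto
      show "integrable lborel (\<lambda>x. \<bar>u0 x\<bar>)" by (rule integrable_abs[OF u0])
      fix x
      have "(\<Sum>i\<in>F. indicator (cell dx i) x *\<^sub>R \<bar>u0 x\<bar>) = (\<Sum>i\<in>F. indicator (cell dx i) x) * \<bar>u0 x\<bar>"
        by (simp add: sum_distrib_right)
      also have "\<dots> \<le> 1 * \<bar>u0 x\<bar>"
        by (rule mult_right_mono) (auto simp: ind_sum[OF dx F])
      finally show "(\<Sum>i\<in>F. indicator (cell dx i) x *\<^sub>R \<bar>u0 x\<bar>) \<le> \<bar>u0 x\<bar>" by simp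
    qed
    finally show ?thesis .
  qed
  have hs: "h summable_on UNIV"
    by (rule nonneg_bdd_above_summable_on) (use hnn hF in \<open>auto intro!: bdd_aboveI\<close>)
  show ?thesis
  proof (rule sm_cmp)
    show "(\<lambda>i. (1/dx) * h i) summable_on UNIV" by (rule summable_on_cmult_right[OF hs])
    show "\<bar>U_init dx u0 i\<bar> \<le> (1/dx) * h i" for i
      unfolding U_init_def using hb[of i] dx by (simp add: abs_mult divide_right_mono)
  qed
qed

theorem mainTheorem7:
  fixes f a u0 :: "real \<Rightarrow> real"
    and fh :: "real \<Rightarrow> real \<Rightarrow> real"
    and b lam c dx dt :: real
  assumes f_lip: "\<exists>L. L-lipschitz_on UNIV f"
    and a_lip: "\<exists>L. L-lipschitz_on UNIV a"
    and a_nonneg: "\<forall>s. a s \<ge> 0"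
    and a_bdd: "bounded (range a)"
    and f0: "f 0 = 0"
    and b_nonneg: "b \<ge> 0"
    and lam: "0 < lam" "lam < 1"
    and c_pos: "c > 0"
    and fh_C1: "C1_2 fh"
    and fh_lip: "\<exists>L. L-lipschitz_on UNIV (\<lambda>p::real \<times> real. fh (fst p) (snd p))"
    and fh_cons: "\<forall>u. fh u u = f u"
    and fh_mono1: "\<forall>x y z. x \<le> y \<longrightarrow> fh x z \<le> fh y z"
    and fh_mono2: "\<forall>x y z. x \<le> y \<longrightarrow> fh z x \<ge> fh z y"
    and dx_pos: "dx > 0" and dt_pos: "dt > 0"
    and u0_L1: "integrable lborel u0"
    and u0_BV: "BV u0"
    and CFL: "dt / dx * ((SUP p::real \<times> real. \<bar>partial1 fh (fst p) (snd p)\<bar>)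
                       + (SUP p::real \<times> real. \<bar>partial2 fh (fst p) (snd p)\<bar>))
              + 2 * dt / dx\<^sup>2 * (SUP s. \<bar>a s\<bar>)
              + b * d_lam c lam * dt / dx powr lam \<le> 1"
  shows "\<forall>n. (let G = Gw c lam dx; A = Aint a;
               U = scheme fh A G dx dt b (U_init dx u0);
               W = (\<lambda>m. Wq fh A G dx b (U m))
           in (SUP i. ennreal \<bar>W n i\<bar>) \<le> (SUP i. ennreal \<bar>W 0 i\<bar>)
            \<and> infsum (\<lambda>i. ennreal \<bar>W n (i + 1) - W n i\<bar>) UNIV
                \<le> infsum (\<lambda>i. ennreal \<bar>W 0 (i + 1) - W 0 i\<bar>) UNIV)"
proof (intro allI)
  fix n
  obtain L where lip: "L-lipschitz_on UNIV (\<lambda>p::real \<times> real. fh (fst p) (snd p))" using fh_lip by blast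
  obtain La where lipa: "La-lipschitz_on UNIV a" using a_lip by blast
  have ca: "continuous_on UNIV a" by (rule lipschitz_on_continuous_on[OF lipa])
  define g where "g = Gw c lam dx 0"
  define p1 where "p1 = (SUP p::real \<times> real. \<bar>partial1 fh (fst p) (snd p)\<bar>)"
  define p2 where "p2 = (SUP p::real \<times> real. \<bar>partial2 fh (fst p) (snd p)\<bar>)"
  define al where "al = (SUP s. \<bar>a s\<bar>)"
  have c0: "c \<ge> 0" using c_pos by simp
  have Grel: "Gw c lam dx = (\<lambda>l j. g (j - l))"
    unfolding g_def by (intro ext) (rule G_rel[OF lam dx_pos c0])
  have g0: "- g 0 = c * (2 * dx powr (1 - lam) / (lam * (1 - lam)))"
    unfolding g_def using g_zero[OF lam dx_pos c_pos] by simp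
  have dl: "b * d_lam c lam * dt / dx powr lam = b * dt / dx * (- g 0)"
  proof -
    have e1: "dx powr (1 - lam) = dx / dx powr lam" using dx_pos by (simp add: powr_diff)
    have e2: "2 / (1 - lam) + 2 / lam = 2 / (lam * (1 - lam))" using lam by (simp add: field_simps)
    have P: "dx powr lam > 0" using dx_pos by simp
    show ?thesis unfolding g0 d_lam_val[OF lam] e2 e1 using P dx_pos lam by (simp add: field_simps)
  qed
  interpret disc fh "Aint a" g dx dt b p1 p2 al
  proof
    show "\<exists>q. 0 \<le> q \<and> q \<le> p1 \<and> fh x' y - fh x y = q * (x' - x)" for x x' y
      unfolding p1_def by (rule fh_q1[OF fh_C1 lip fh_mono1])
    show "\<exists>q. 0 \<le> q \<and> q \<le> p2 \<and> fh x y' - fh x y = - q * (y' - y)" for x y y'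
      unfolding p2_def by (rule fh_q2[OF fh_C1 lip fh_mono2])
    show "\<exists>q. 0 \<le> q \<and> q \<le> al \<and> Aint a v - Aint a u = q * (v - u)" for u v
      unfolding al_def by (rule A_q[OF ca a_nonneg a_bdd])
    show "fh 0 0 = 0" using fh_cons f0 by simp
    show "Aint a 0 = 0" by (rule Aint0)
    show "g summable_on UNIV" unfolding g_def by (rule g_summable[OF lam dx_pos c_pos])
    show "infsum g UNIV = 0" unfolding g_def by (rule g_sum0[OF lam dx_pos c_pos])
    show "\<And>k. k \<noteq> 0 \<Longrightarrow> 0 \<le> g k" unfolding g_def by (rule g_nonneg[OF lam dx_pos c_pos])
    show "dt / dx * (p1 + p2) + 2 * dt / dx\<^sup>2 * al + b * dt / dx * - g 0 \<le> 1"
      using CFL dl unfolding p1_def p2_def al_def by simp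
  qed (use dx_pos dt_pos b_nonneg in auto)
  have U0: "U_init dx u0 summable_on UNIV" by (rule U_init_summable[OF dx_pos u0_L1])
  show "let G = Gw c lam dx; A = Aint a;
               U = scheme fh A G dx dt b (U_init dx u0);
               W = (\<lambda>m. Wq fh A G dx b (U m))
           in (SUP i. ennreal \<bar>W n i\<bar>) \<le> (SUP i. ennreal \<bar>W 0 i\<bar>)
            \<and> infsum (\<lambda>i. ennreal \<bar>W n (i + 1) - W n i\<bar>) UNIV
                \<le> infsum (\<lambda>i. ennreal \<bar>W 0 (i + 1) - W 0 i\<bar>) UNIV"
    unfolding Let_def Grel
    using Sc_sup_enn[OF U0, of n] Sc_tv_enn[OF U0, of n] unfolding Wd_def by simp
qed


end
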